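(* Let $v\in\mathbb{Z}^d$ be primitive and $p$ an odd prime. Then $O_{v,p}\cap\mathcal{U}=\bigsqcup_{h\in M_0}O_{v,p,h}$.
   Context: Setup: $\mathbb{G}_1=\mathrm{SO}_d$, $\mathbb{G}_2=\mathrm{ASL}_{d-1}=\{\begin{pmatrix}g&*\\0&1\end{pmatrix}:g\in\mathrm{SL}_{d-1}\}$, $\mathbb{G}=\mathbb{G}_1\times\mathbb{G}_2$. Elements of $\mathbb{G}(\mathbb{R}\times\mathbb{Q}_p)$ are written $((g_{1,\infty},g_{1,p}),(g_{2,\infty},g_{2,p}))$; $\mathbb{G}(\mathbb{Z}[1/p])$ is embedded diagonally, and $\mathcal{Y}_p=\mathbb{G}(\mathbb{R}\times\mathbb{Q}_p)/\mathbb{G}(\mathbb{Z}[1/p])$; $\mathcal{U}=\mathbb{G}(\mathbb{R}\times\mathbb{Z}_p)\mathbb{G}(\mathbb{Z}[1/p])\subseteq\mathcal{Y}_p$. For primitive $v$: $\Lambda_v=v^\perp\cap\mathbb{Z}^d$; $H_v\le\mathrm{SO}_d$ the stabilizer of $v$; $g_v\in\mathrm{SL}_d(\mathbb{Z})$ a fixed matrix whose first $d-1$ columns form a positively oriented $\mathbb{Z}$-basis of $\Lambda_v$; $L_v=\{(h,g_v^{-1}hg_v):h\in H_v\}\le\mathbb{G}$; $k_v\in\mathrm{SO}_d(\mathbb{R})$ fixed with $k_vv=\|v\|e_d$; $a_v=\mathrm{diag}(\|v\|^{-1/(d-1)},\dots,\|v\|^{-1/(d-1)},\|v\|)$. $O_{v,p}=((k_v,e),(a_vk_vg_v,e))\cdot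 L_v(\mathbb{R}\times\mathbb{Q}_p)\,\mathbb{G}(\mathbb{Z}[1/p])$. $M$ is a finite set of representatives of $H_v(\mathbb{Q}_p)=\bigsqcup_{h\in M}H_v(\mathbb{Z}_p)hH_v(\mathbb{Z}[1/p])$, and $M_0=\{h\in M:h\in\mathrm{SO}_d(\mathbb{Z}_p)\mathrm{SO}_d(\mathbb{Z}[1/p])\}$ (the $h\in M$ lying in the set of $p$-adic $\mathbb{G}_1$-coordinates of elements of $\mathcal{U}$). $K=H_{e_d}(\mathbb{R})\cong\mathrm{SO}_{d-1}(\mathbb{R})$, $\Delta K\times L_v(\mathbb{Z}_p)=\{((k,h'),(k,g_v^{-1}h'g_v)):k\in K,h'\in H_v(\mathbb{Z}_p)\}$, and $O_{v,p,h}=(\Delta K\times L_v(\mathbb{Z}_p))\cdot((k_v,h),(a_vk_vg_v,g_v^{-1}hg_v))\mathbb{G}(\mathbb{Z}[1/p])$. *)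

theory Defs
  imports Complex_Main "Jordan_Normal_Form.Determinant"
begin

text \<open>A field 'k of characteristic 0 (containing Q via of_rat) together with an absolute value
  absv is Q_p if absv is a non-archimedean absolute value restricting to the p-adic absolute
  value on Q, 'k is complete for absv, and Q is dense in 'k.  This determines (k, absv) up to
  isometric isomorphism, so quantifying over all such pairs is the same as talking about Q_p.\<close>

definition is_Qp :: "nat \<Rightarrow> ('k::field_char_0 \<Rightarrow> real) \<Rightarrow> bool" where
  "is_Qp p absv \<longleftrightarrow>
     (\<forall>x. absv x \<ge> 0) \<and> (\<forall>x. absv x = 0 \<longleftrightarrow> x = 0) \<and>
     (\<forall>x y. absv (x * y) = absv x * absv y) \<and>
     (\<forall>x y. absv (x + y) \<le> max (absv x) (absv y)) \<and>
     absv (of_nat p) = 1 / real p \<and>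
     (\<forall>n::int. coprime n (int p) \<longrightarrow> absv (of_int n) = 1) \<and>
     (\<forall>X :: nat \<Rightarrow> 'k. (\<forall>e>0. \<exists>N. \<forall>m\<ge>N. \<forall>n\<ge>N. absv (X m - X n) < e) \<longrightarrow>
         (\<exists>L. \<forall>e>0. \<exists>N. \<forall>n\<ge>N. absv (X n - L) < e)) \<and>
     (\<forall>x e. e > 0 \<longrightarrow> (\<exists>q::rat. absv (x - of_rat q) < e))"

definition Zp :: "('k \<Rightarrow> real) \<Rightarrow> 'k set" where
  "Zp absv = {x. absv x \<le> 1}"

definition Zinvp :: "nat \<Rightarrow> rat set" where
  "Zinvp p = {q. \<exists>n::nat. q * of_nat p ^ n \<in> \<int>}"

definition entries_in :: "nat \<Rightarrow> 'a set \<Rightarrow> 'a mat \<Rightarrow> bool" where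
  "entries_in d R g \<longleftrightarrow> (\<forall>i<d. \<forall>j<d. g $$ (i,j) \<in> R)"

definition SO_pts :: "nat \<Rightarrow> 'a::comm_ring_1 set \<Rightarrow> 'a mat set" where
  "SO_pts d R = {g. g \<in> carrier_mat d d \<and> entries_in d R g \<and>
                    g * transpose_mat g = 1\<^sub>m d \<and> det g = 1}"

text \<open>ASL_{d-1}(R), realised as d x d matrices [[g, *],[0, 1]] with g in SL_{d-1}(R).\<close>
definition ASL_pts :: "nat \<Rightarrow> 'a::comm_ring_1 set \<Rightarrow> 'a mat set" where
  "ASL_pts d R = {g. g \<in> carrier_mat d d \<and> entries_in d R g \<and>
                     (\<forall>j<d. g $$ (d-1, j) = (if j = d-1 then 1 else 0)) \<and>
                     det (mat (d-1) (d-1) (\<lambda>(i,j). g $$ (i,j))) = 1}"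

definition H_pts :: "nat \<Rightarrow> int vec \<Rightarrow> 'a::comm_ring_1 set \<Rightarrow> 'a mat set" where
  "H_pts d v R = {h \<in> SO_pts d R. h *\<^sub>v map_vec of_int v = map_vec of_int v}"

text \<open>Points of G(R x Q_p) = ((g_{1,inf}, g_{1,p}), (g_{2,inf}, g_{2,p})).\<close>
type_synonym 'k pt = "(real mat \<times> 'k mat) \<times> (real mat \<times> 'k mat)"

fun ptmul :: "'k::field_char_0 pt \<Rightarrow> 'k pt \<Rightarrow> 'k pt" where
  "ptmul ((a,b),(c,e)) ((a',b'),(c',e')) = ((a * a', b * b'), (c * c', e * e'))"

fun diag_emb :: "rat mat \<times> rat mat \<Rightarrow> 'k::field_char_0 pt" where
  "diag_emb (g1, g2) = ((map_mat of_rat g1, map_mat of_rat g1), (map_mat of_rat g2, map_mat of_rat g2))"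

definition Gamma :: "nat \<Rightarrow> nat \<Rightarrow> (rat mat \<times> rat mat) set" where
  "Gamma p d = {(g1, g2). g1 \<in> SO_pts d (Zinvp p) \<and> g2 \<in> ASL_pts d (Zinvp p)}"

definition G_RQp :: "nat \<Rightarrow> 'k::field_char_0 pt set" where
  "G_RQp d = {((a,b),(c,e)). a \<in> SO_pts d UNIV \<and> b \<in> SO_pts d UNIV \<and>
                             c \<in> ASL_pts d UNIV \<and> e \<in> ASL_pts d UNIV}"

definition G_RZp :: "nat \<Rightarrow> ('k::field_char_0 \<Rightarrow> real) \<Rightarrow> 'k pt set" where
  "G_RZp d absv = {((a,b),(c,e)). a \<in> SO_pts d UNIV \<and> b \<in> SO_pts d (Zp absv) \<and>
                                  c \<in> ASL_pts d UNIV \<and> e \<in> ASL_pts d (Zp absv)}"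

text \<open>The point x G(Z[1/p]) of Y_p = G(R x Q_p)/G(Z[1/p]), represented by the coset.\<close>
definition coset :: "nat \<Rightarrow> nat \<Rightarrow> 'k::field_char_0 pt \<Rightarrow> 'k pt set" where
  "coset p d x = {ptmul x (diag_emb \<gamma>) | \<gamma>. \<gamma> \<in> Gamma p d}"

definition Y_p :: "nat \<Rightarrow> nat \<Rightarrow> 'k::field_char_0 itself \<Rightarrow> 'k pt set set" where
  "Y_p p d _ = coset p d ` G_RQp d"

text \<open>\<U> = G(R x Z_p) G(Z[1/p]).\<close>
definition U_set :: "nat \<Rightarrow> nat \<Rightarrow> ('k::field_char_0 \<Rightarrow> real) \<Rightarrow> 'k pt set set" where
  "U_set p d absv = coset p d ` G_RZp d absv"

definition primitive :: "nat \<Rightarrow> int vec \<Rightarrow> bool" where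
  "primitive d v \<longleftrightarrow> v \<in> carrier_vec d \<and>
     (\<forall>n::int. (\<forall>i<d. n dvd v $ i) \<longrightarrow> n = 1 \<or> n = -1)"

definition vnorm :: "nat \<Rightarrow> int vec \<Rightarrow> real" where
  "vnorm d v = sqrt (\<Sum>i<d. (real_of_int (v $ i))\<^sup>2)"

text \<open>g_v in SL_d(Z) whose first d-1 columns form a positively oriented Z-basis of
  Lambda_v = v^perp \<inter> Z^d (positive orientation: (b_1,...,b_{d-1}, v) is positively oriented).\<close>
definition is_gv :: "nat \<Rightarrow> int vec \<Rightarrow> int mat \<Rightarrow> bool" where
  "is_gv d v g \<longleftrightarrow> g \<in> carrier_mat d d \<and> det g = 1 \<and>
     (\<forall>j<d-1. col g j \<bullet> v = 0) \<and>
     (\<forall>w \<in> carrier_vec d. w \<bullet> v = 0 \<longrightarrow>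
         (\<exists>c :: nat \<Rightarrow> int. \<forall>i<d. w $ i = (\<Sum>j<d-1. c j * g $$ (i,j)))) \<and>
     det (mat d d (\<lambda>(i,j). if j < d-1 then g $$ (i,j) else v $ i)) > 0"

definition is_kv :: "nat \<Rightarrow> int vec \<Rightarrow> real mat \<Rightarrow> bool" where
  "is_kv d v k \<longleftrightarrow> k \<in> SO_pts d UNIV \<and>
     k *\<^sub>v map_vec real_of_int v = vnorm d v \<cdot>\<^sub>v unit_vec d (d-1)"

definition a_v :: "nat \<Rightarrow> int vec \<Rightarrow> real mat" where
  "a_v d v = mat d d (\<lambda>(i,j). if i = j then
       (if i = d-1 then vnorm d v else vnorm d v powr (- 1 / real (d-1))) else 0)"

text \<open>L_v(R x Q_p) = {((h_inf,h_p),(g_v^-1 h_inf g_v, g_v^-1 h_p g_v))}.\<close>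
definition L_RQp :: "nat \<Rightarrow> int vec \<Rightarrow> int mat \<Rightarrow> 'k::field_char_0 pt set" where
  "L_RQp d v g = {((h1,h2),(m1,m2)). h1 \<in> H_pts d v UNIV \<and> h2 \<in> H_pts d v UNIV \<and>
      m1 \<in> carrier_mat d d \<and> m2 \<in> carrier_mat d d \<and>
      map_mat of_int g * m1 = h1 * map_mat of_int g \<and>
      map_mat of_int g * m2 = h2 * map_mat of_int g}"

definition O_vp :: "nat \<Rightarrow> nat \<Rightarrow> int vec \<Rightarrow> int mat \<Rightarrow> real mat \<Rightarrow> 'k::field_char_0 itself
                      \<Rightarrow> 'k pt set set" where
  "O_vp p d v g k _ = {coset p d (ptmul ((k, 1\<^sub>m d), (a_v d v * k * map_mat of_int g, 1\<^sub>m d)) l)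
                        | l. l \<in> L_RQp d v g}"

definition K_grp :: "nat \<Rightarrow> real mat set" where
  "K_grp d = {k \<in> SO_pts d UNIV. k *\<^sub>v unit_vec d (d-1) = unit_vec d (d-1)}"

definition DK_L :: "nat \<Rightarrow> int vec \<Rightarrow> int mat \<Rightarrow> ('k::field_char_0 \<Rightarrow> real) \<Rightarrow> 'k pt set" where
  "DK_L d v g absv = {((k,h'),(k,m')) | k h' m'. k \<in> K_grp d \<and> h' \<in> H_pts d v (Zp absv) \<and>
       m' \<in> carrier_mat d d \<and> map_mat of_int g * m' = h' * map_mat of_int g}"

definition O_vph :: "nat \<Rightarrow> nat \<Rightarrow> int vec \<Rightarrow> int mat \<Rightarrow> real mat \<Rightarrow> ('k::field_char_0 \<Rightarrow> real)
                       \<Rightarrow> 'k mat \<Rightarrow> 'k pt set set" where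
  "O_vph p d v g k absv h = {coset p d (ptmul y ((k, h), (a_v d v * k * map_mat of_int g, m)))
       | y m. y \<in> DK_L d v g absv \<and> m \<in> carrier_mat d d \<and>
              map_mat of_int g * m = h * map_mat of_int g}"

definition dcoset :: "nat \<Rightarrow> nat \<Rightarrow> int vec \<Rightarrow> ('k::field_char_0 \<Rightarrow> real) \<Rightarrow> 'k mat \<Rightarrow> 'k mat set" where
  "dcoset p d v absv h = {a * h * map_mat of_rat b | a b.
       a \<in> H_pts d v (Zp absv) \<and> b \<in> H_pts d v (Zinvp p)}"

definition is_rep_set :: "nat \<Rightarrow> nat \<Rightarrow> int vec \<Rightarrow> ('k::field_char_0 \<Rightarrow> real) \<Rightarrow> 'k mat set \<Rightarrow> bool" where
  "is_rep_set p d v absv M \<longleftrightarrow> finite M \<and> M \<subseteq> H_pts d v UNIV \<and>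
     H_pts d v UNIV = (\<Union>h\<in>M. dcoset p d v absv h) \<and>
     disjoint_family_on (dcoset p d v absv) M"

definition M0 :: "nat \<Rightarrow> nat \<Rightarrow> ('k::field_char_0 \<Rightarrow> real) \<Rightarrow> 'k mat set \<Rightarrow> 'k mat set" where
  "M0 p d absv M = {h \<in> M. \<exists>a b. a \<in> SO_pts d (Zp absv) \<and> b \<in> SO_pts d (Zinvp p) \<and>
                                  h = a * map_mat of_rat b}"

end

theory Submission
  imports Defs
begin

section \<open>Absolute value facts\<close>

locale qp =
  fixes p :: nat and absv :: "'k::field_char_0 \<Rightarrow> real"
  assumes Qp: "is_Qp p absv" and pr: "prime p"
begin

lemma nonneg: "absv x \<ge> 0" using Qp unfolding is_Qp_def by blast
lemma zero_iff: "absv x = 0 \<longleftrightarrow> x = 0" using Qp unfolding is_Qp_def by blast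
lemma mult: "absv (x * y) = absv x * absv y" using Qp unfolding is_Qp_def by blast
lemma ultra: "absv (x + y) \<le> max (absv x) (absv y)" using Qp unfolding is_Qp_def by blast
lemma absp: "absv (of_nat p) = 1 / real p" using Qp unfolding is_Qp_def by blast
lemma cop: "coprime n (int p) \<Longrightarrow> absv (of_int n) = 1" using Qp unfolding is_Qp_def by blast

lemma one[simp]: "absv 1 = 1"
proof -
  have "absv 1 = absv 1 * absv 1" using mult[of 1 1] by simp
  moreover have "absv 1 \<noteq> 0" using zero_iff by simp
  ultimately show ?thesis by (metis mult_cancel_left1)
qed

lemma zero[simp]: "absv 0 = 0" using zero_iff by simp

lemma minus[simp]: "absv (- x) = absv x"
proof -
  have "absv (-1) * absv (-1) = 1" using mult[of "-1" "-1"] by simp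
  hence "(absv (-1))^2 = 1" by (simp add: power2_eq_square)
  hence "absv (-1) = 1 \<or> absv (-1) = -1" using power2_eq_1_iff by blast
  hence "absv (-1) = 1" using nonneg[of "-1"] by auto
  thus ?thesis using mult[of "-1" x] by simp
qed

lemma pow: "absv (x ^ n) = absv x ^ n"
  by (induction n) (auto simp: mult)

lemma of_nat_le: "absv (of_nat n) \<le> 1"
proof (induction n)
  case (Suc n)
  have "absv (of_nat (Suc n)) = absv (of_nat n + 1)" by (simp add: add.commute)
  also have "\<dots> \<le> max (absv (of_nat n)) (absv 1)" by (rule ultra)
  finally show ?case using Suc by simp
qed simp

lemma of_int_le: "absv (of_int n) \<le> 1"
proof (cases "n \<ge> 0")
  case True
  then show ?thesis using of_nat_le[of "nat n"] by (metis of_int_of_nat_eq int_nat_eq)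
next
  case False
  then have "of_int n = - (of_nat (nat (-n)) :: 'k)" by simp
  then show ?thesis using of_nat_le[of "nat (-n)"] by simp
qed

lemma sum_le: "finite I \<Longrightarrow> (\<And>i. i \<in> I \<Longrightarrow> absv (f i) \<le> 1) \<Longrightarrow> absv (sum f I) \<le> 1"
proof (induction I rule: finite_induct)
  case (insert x F)
  have "absv (sum f (insert x F)) = absv (f x + sum f F)" using insert by simp
  also have "\<dots> \<le> max (absv (f x)) (absv (sum f F))" by (rule ultra)
  moreover have "absv (f x) \<le> 1" using insert by auto
  moreover have "absv (sum f F) \<le> 1" using insert by auto
  ultimately show ?case by linarith
qed simp

lemma prime_p: "p > 1" using pr prime_gt_1_nat by blast

lemma key_int:
  "q * of_nat p ^ n \<in> \<int> \<Longrightarrow> absv (of_rat q) \<le> 1 \<Longrightarrow> q \<in> \<int>"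
proof (induction n arbitrary: q)
  case 0
  then show ?case by simp
next
  case (Suc n)
  from Suc.prems(1) obtain z where z: "q * of_nat p ^ Suc n = of_int z" by (auto elim: Ints_cases)
  show ?case
  proof (cases "int p dvd z")
    case True
    then obtain z' where "z = int p * z'" by blast
    hence "q * of_nat p ^ n = of_int z'" using z prime_p
      by (simp add: field_simps) 
    then show ?thesis using Suc.IH Suc.prems(2) by (metis Ints_of_int)
  next
    case False
    have "prime (int p)" using pr by simp
    hence "coprime (int p) z" using False prime_imp_coprime by blast
    hence "coprime z (int p)" by (simp add: coprime_commute)
    hence a1: "absv (of_int z) = 1" by (rule cop)
    have "(of_int z :: 'k) = of_rat (q * of_nat p ^ Suc n)" using z by (metis of_rat_of_int_eq)
    also have "\<dots> = of_rat q * of_nat p ^ Suc n" by (simp add: of_rat_mult of_rat_power)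
    finally have "absv (of_int z :: 'k) = absv (of_rat q :: 'k) * (1 / real p) ^ Suc n"
      by (simp add: mult pow absp)
    hence "1 = absv (of_rat q :: 'k) * (1 / real p) ^ Suc n" using a1 by simp
    moreover have "(1 / real p) ^ Suc n < 1" using prime_p
      by (intro power_Suc_less_one) auto
    moreover have "(1 / real p) ^ Suc n \<ge> 0" by simp
    moreover have "absv (of_rat q :: 'k) * (1 / real p) ^ Suc n \<le> 1 * (1 / real p) ^ Suc n"
      using Suc.prems(2) by (intro mult_right_mono) auto
    ultimately have False by linarith
    then show ?thesis ..
  qed
qed

lemma key: "q \<in> Zinvp p \<Longrightarrow> absv (of_rat q) \<le> 1 \<Longrightarrow> q \<in> \<int>"
  unfolding Zinvp_def using key_int by blast

end

definition subr :: "'a::comm_ring_1 set \<Rightarrow> bool" where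
  "subr R \<longleftrightarrow> (\<forall>n::int. of_int n \<in> R) \<and> (\<forall>x\<in>R. \<forall>y\<in>R. x + y \<in> R \<and> x * y \<in> R \<and> - x \<in> R)"

lemma subr_UNIV: "subr UNIV" unfolding subr_def by simp

lemma subrD:
  assumes "subr R"
  shows "of_int n \<in> R" "0 \<in> R" "1 \<in> R" "x \<in> R \<Longrightarrow> y \<in> R \<Longrightarrow> x + y \<in> R"
    "x \<in> R \<Longrightarrow> y \<in> R \<Longrightarrow> x * y \<in> R" "x \<in> R \<Longrightarrow> - x \<in> R"
  using assms unfolding subr_def by (auto, metis of_int_0, metis of_int_1)

lemma subr_sum: assumes "subr R" shows "finite I \<Longrightarrow> (\<And>i. i \<in> I \<Longrightarrow> f i \<in> R) \<Longrightarrow> sum f I \<in> R"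
  by (induction I rule: finite_induct) (auto simp: subrD[OF assms])

lemma (in qp) subr_Zp: "subr (Zp absv)"
  unfolding subr_def Zp_def
  using of_int_le ultra by (auto simp: mult intro: mult_le_one nonneg) (smt (verit) ultra)

lemma subr_Zinvp: "subr (Zinvp p)"
proof -
  have "(x + y) \<in> Zinvp p \<and> x * y \<in> Zinvp p \<and> - x \<in> Zinvp p" if xy: "x \<in> Zinvp p" "y \<in> Zinvp p" for x y
  proof -
    obtain n where n: "x * of_nat p ^ n \<in> \<int>" using xy(1) unfolding Zinvp_def mem_Collect_eq by blast
    obtain m where m: "y * of_nat p ^ m \<in> \<int>" using xy(2) unfolding Zinvp_def mem_Collect_eq by blast
    have pn: "(of_nat p ^ n :: rat) \<in> \<int>" "(of_nat p ^ m :: rat) \<in> \<int>" by auto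
    have "(x + y) * of_nat p ^ (n + m) = (x * of_nat p ^ n) * of_nat p ^ m + (y * of_nat p ^ m) * of_nat p ^ n"
      by (simp add: power_add algebra_simps)
    also have "\<dots> \<in> \<int>" by (rule Ints_add[OF Ints_mult[OF n pn(2)] Ints_mult[OF m pn(1)]])
    finally have 1: "x + y \<in> Zinvp p" unfolding Zinvp_def by blast
    have "(x * y) * of_nat p ^ (n + m) = (x * of_nat p ^ n) * (y * of_nat p ^ m)"
      by (simp add: power_add algebra_simps)
    also have "\<dots> \<in> \<int>" by (rule Ints_mult[OF n m])
    finally have 2: "x * y \<in> Zinvp p" unfolding Zinvp_def by blast
    have "(- x) * of_nat p ^ n \<in> \<int>" using n by (metis Ints_minus minus_mult_left)
    hence 3: "- x \<in> Zinvp p" unfolding Zinvp_def by blast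
    show ?thesis using 1 2 3 by blast
  qed
  moreover have "of_int n \<in> Zinvp p" for n
    unfolding Zinvp_def mem_Collect_eq by (rule exI[of _ 0]) simp
  ultimately show ?thesis unfolding subr_def by blast
qed


lemma cancel_mm:
  fixes A :: "'a::comm_ring_1 mat"
  assumes "A \<in> carrier_mat d d" "B \<in> carrier_mat d d" "A * B = 1\<^sub>m d" "X \<in> carrier_mat d n"
  shows "A * (B * X) = X"
  using assms by (simp add: assoc_mult_mat[symmetric, of A d d B d X n] left_mult_one_mat)

lemma cancel_mv:
  fixes A :: "'a::comm_ring_1 mat"
  assumes "A \<in> carrier_mat d d" "B \<in> carrier_mat d d" "A * B = 1\<^sub>m d" "x \<in> carrier_vec d"
  shows "A *\<^sub>v (B *\<^sub>v x) = x"
  using assms by (simp add: assoc_mult_mat_vec[symmetric, of A d d B d x] one_mult_mat_vec)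

lemma entries_mult:
  assumes R: "subr R" and A: "A \<in> carrier_mat d d" and B: "B \<in> carrier_mat d d"
    and eA: "entries_in d R A" and eB: "entries_in d R B"
  shows "entries_in d R (A * B)"
  unfolding entries_in_def
proof (intro allI impI)
  fix i j assume ij: "i < d" "j < d"
  have "(A * B) $$ (i,j) = (\<Sum>k\<in>{0..<d}. A $$ (i,k) * B $$ (k,j))"
    using A B ij by (simp add: scalar_prod_def)
  also have "\<dots> \<in> R" using eA eB ij unfolding entries_in_def
    by (intro subr_sum[OF R]) (auto intro: subrD(5)[OF R])
  finally show "(A * B) $$ (i,j) \<in> R" .
qed

lemma entries_transpose:
  "A \<in> carrier_mat d d \<Longrightarrow> entries_in d R A \<Longrightarrow> entries_in d R (transpose_mat A)"
  unfolding entries_in_def by auto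

lemma entries_one: "subr R \<Longrightarrow> entries_in d R (1\<^sub>m d)"
  unfolding entries_in_def by (auto intro: subrD)

lemma entries_of_int: "subr R \<Longrightarrow> A \<in> carrier_mat d d \<Longrightarrow> entries_in d R (map_mat of_int A)"
  unfolding entries_in_def by (auto intro: subrD)

lemma entries_UNIV: "entries_in d UNIV A" unfolding entries_in_def by auto

lemma orth_left:
  fixes b :: "'a::field mat"
  assumes "b \<in> carrier_mat d d" "b * transpose_mat b = 1\<^sub>m d"
  shows "transpose_mat b * b = 1\<^sub>m d"
  using mat_mult_left_right_inverse[of b d "transpose_mat b"] assms by auto

lemma SO_D:
  fixes b :: "'a::field mat"
  assumes "b \<in> SO_pts d R"
  shows "b \<in> carrier_mat d d" "entries_in d R b" "b * transpose_mat b = 1\<^sub>m d"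
    "transpose_mat b * b = 1\<^sub>m d" "det b = 1"
  using assms orth_left unfolding SO_pts_def by auto

lemma SO_mult:
  fixes a b :: "'a::field mat"
  assumes R: "subr R" and a: "a \<in> SO_pts d R" and b: "b \<in> SO_pts d R"
  shows "a * b \<in> SO_pts d R"
proof -
  note A = SO_D[OF a] and B = SO_D[OF b]
  have "(a * b) * transpose_mat (a * b) = a * (b * (transpose_mat b * transpose_mat a))"
    using A B by (simp add: transpose_mult assoc_mult_mat[of _ d d _ d _ d])
  also have "\<dots> = 1\<^sub>m d" using A B by (simp add: cancel_mm[of b d])
  finally show ?thesis
    using A B entries_mult[OF R] by (auto simp: SO_pts_def det_mult)
qed

lemma SO_transpose:
  fixes a :: "'a::field mat"
  assumes a: "a \<in> SO_pts d R"
  shows "transpose_mat a \<in> SO_pts d R"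
  using SO_D[OF a] entries_transpose[of a d R] det_transpose[of a d]
  unfolding SO_pts_def by auto

lemma SO_one: "subr R \<Longrightarrow> 1\<^sub>m d \<in> SO_pts d R"
  unfolding SO_pts_def using entries_one by auto

lemma SO_mono: "R \<subseteq> S \<Longrightarrow> a \<in> SO_pts d R \<Longrightarrow> a \<in> SO_pts d S"
  unfolding SO_pts_def entries_in_def by auto

lemma H_D:
  fixes b :: "'a::field mat"
  assumes "b \<in> H_pts d v R"
  shows "b \<in> SO_pts d R" "b *\<^sub>v map_vec of_int v = map_vec of_int v"
  using assms unfolding H_pts_def by auto

lemma H_transpose_fix:
  fixes b :: "'a::field mat"
  assumes b: "b \<in> carrier_mat d d" "transpose_mat b * b = 1\<^sub>m d" and v: "v \<in> carrier_vec d"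
    and bv: "b *\<^sub>v v = v"
  shows "transpose_mat b *\<^sub>v v = v"
proof -
  have "transpose_mat b *\<^sub>v v = transpose_mat b *\<^sub>v (b *\<^sub>v v)" using bv by simp
  also have "\<dots> = v" using b v by (intro cancel_mv[of _ d]) auto
  finally show ?thesis .
qed

lemma H_mult:
  fixes a b :: "'a::field mat"
  assumes R: "subr R" and a: "a \<in> H_pts d v R" and b: "b \<in> H_pts d v R" and v: "v \<in> carrier_vec d"
  shows "a * b \<in> H_pts d v R"
proof -
  have c: "a \<in> carrier_mat d d" "b \<in> carrier_mat d d" using a b unfolding H_pts_def SO_pts_def by auto
  have "(a * b) *\<^sub>v map_vec of_int v = a *\<^sub>v (b *\<^sub>v map_vec of_int v)"
    using c v by (simp add: assoc_mult_mat_vec)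
  also have "\<dots> = map_vec of_int v" using H_D[OF a] H_D[OF b] by simp
  finally show ?thesis using SO_mult[OF R H_D(1)[OF a] H_D(1)[OF b]] unfolding H_pts_def by auto
qed

lemma H_transpose:
  fixes a :: "'a::field mat"
  assumes a: "a \<in> H_pts d v R" and v: "v \<in> carrier_vec d"
  shows "transpose_mat a \<in> H_pts d v R"
  using H_transpose_fix[of a d "map_vec of_int v"] SO_D[OF H_D(1)[OF a]] H_D(2)[OF a]
    SO_transpose[OF H_D(1)[OF a]] v unfolding H_pts_def by auto

lemma H_one: "subr R \<Longrightarrow> v \<in> carrier_vec d \<Longrightarrow> 1\<^sub>m d \<in> H_pts d v R"
  unfolding H_pts_def using SO_one by auto

lemma H_mono: "R \<subseteq> S \<Longrightarrow> a \<in> H_pts d v R \<Longrightarrow> a \<in> H_pts d v S"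
  unfolding H_pts_def using SO_mono by auto

definition lastrow :: "nat \<Rightarrow> 'a::comm_ring_1 mat \<Rightarrow> bool" where
  "lastrow d M \<longleftrightarrow> (\<forall>j<d. M $$ (d-1, j) = (if j = d-1 then 1 else 0))"

lemma lastrow_left:
  assumes X: "X \<in> carrier_mat d d" and lr: "lastrow d X" and Z: "Z \<in> carrier_mat d n" and j: "j < n"
    and d: "d \<ge> 1"
  shows "(X * Z) $$ (d-1, j) = Z $$ (d-1, j)"
proof -
  have "(X * Z) $$ (d-1, j) = (\<Sum>k\<in>{0..<d}. X $$ (d-1,k) * Z $$ (k,j))"
    using X Z j d by (simp add: scalar_prod_def)
  also have "\<dots> = (\<Sum>k\<in>{0..<d}. (if k = d-1 then Z $$ (d-1,j) else 0))"
    using lr unfolding lastrow_def by (intro sum.cong) auto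
  also have "\<dots> = Z $$ (d-1, j)" using d by simp
  finally show ?thesis .
qed

lemma lastrow_mult:
  assumes "X \<in> carrier_mat d d" "lastrow d X" "Z \<in> carrier_mat d d" "lastrow d Z" "d \<ge> 1"
  shows "lastrow d (X * Z)"
  using lastrow_left[OF assms(1,2,3) _ assms(5)] assms(4) unfolding lastrow_def by auto

lemma lastrow_inv:
  assumes "X \<in> carrier_mat d d" "lastrow d X" "Z \<in> carrier_mat d d" "X * Z = 1\<^sub>m d" "d \<ge> 1"
  shows "lastrow d Z"
  using lastrow_left[OF assms(1,2,3) _ assms(5)] assms(4,5) unfolding lastrow_def
  by (metis index_one_mat(1) diff_less less_one order_less_le_trans zero_less_one)

lemma lastrow_det:
  fixes M :: "'a::comm_ring_1 mat"
  assumes M: "M \<in> carrier_mat d d" and lr: "lastrow d M" and d: "d \<ge> 1"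
  shows "det M = det (mat (d-1) (d-1) (\<lambda>(i,j). M $$ (i,j)))"
proof -
  have "det M = (\<Sum>j<d. M $$ (d-1,j) * cofactor M (d-1) j)"
    using laplace_expansion_row[OF M] d by simp
  also have "\<dots> = (\<Sum>j<d. if j = d-1 then cofactor M (d-1) (d-1) else 0)"
    using lr unfolding lastrow_def by (intro sum.cong) auto
  also have "\<dots> = cofactor M (d-1) (d-1)" using d by simp
  also have "\<dots> = det (mat_delete M (d-1) (d-1))"
    unfolding cofactor_def by (simp add: mult_2[symmetric] power_mult)
  also have "mat_delete M (d-1) (d-1) = mat (d-1) (d-1) (\<lambda>(i,j). M $$ (i,j))"
    using M unfolding mat_delete_def by (intro eq_matI) auto
  finally show ?thesis .
qed

lemma ASL_intro:
  assumes "M \<in> carrier_mat d d" "entries_in d R M" "lastrow d M" "det M = 1" "d \<ge> 1"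
  shows "M \<in> ASL_pts d R"
  using assms lastrow_det[OF assms(1,3,5)] unfolding ASL_pts_def lastrow_def by auto

lemma ASL_D:
  assumes "M \<in> ASL_pts d R" "d \<ge> 1"
  shows "M \<in> carrier_mat d d" "entries_in d R M" "lastrow d M" "det M = 1"
  using assms lastrow_det[of M d] unfolding ASL_pts_def lastrow_def by auto


section \<open>Completing a primitive integer row to an element of SL_d(Z)\<close>

definition P_row :: "nat \<Rightarrow> (nat \<Rightarrow> int) \<Rightarrow> bool" where
  "P_row d r \<longleftrightarrow> (\<exists>C Ci :: int mat. C \<in> carrier_mat d d \<and> Ci \<in> carrier_mat d d \<and>
     C * Ci = 1\<^sub>m d \<and> Ci * C = 1\<^sub>m d \<and> det C = 1 \<and> (\<forall>j<d. C $$ (d-1, j) = r j))"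

lemma P_row_cong: "P_row d r \<Longrightarrow> (\<And>j. j < d \<Longrightarrow> r j = r' j) \<Longrightarrow> P_row d r'"
  unfolding P_row_def by metis

lemma P_base: "d \<ge> 1 \<Longrightarrow> P_row d (\<lambda>j. if j = d-1 then 1 else 0)"
  unfolding P_row_def by (rule exI[of _ "1\<^sub>m d"], rule exI[of _ "1\<^sub>m d"]) auto

lemma P_step:
  assumes P: "P_row d r" and ij: "i < d" "j < d" "i \<noteq> j"
  shows "P_row d (r(i := r i + c * r j))"
proof -
  obtain C Ci where C: "C \<in> carrier_mat d d" "Ci \<in> carrier_mat d d"
     "C * Ci = 1\<^sub>m d" "Ci * C = 1\<^sub>m d" "det C = 1" "\<forall>j<d. C $$ (d-1, j) = r j"
    using P unfolding P_row_def by blast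
  define E where "E = addrow_mat d c j i"
  define E' where "E' = addrow_mat d (-c) j i"
  have E: "E \<in> carrier_mat d d" "E' \<in> carrier_mat d d" unfolding E_def E'_def by auto
  have EE: "E * E' = 1\<^sub>m d" unfolding E_def E'_def by (rule addrow_mat_inv) (use ij in auto)
  have E'E: "E' * E = 1\<^sub>m d" unfolding E_def E'_def using addrow_mat_inv[of j d i "-c"] ij by auto
  have dE: "det E = 1" unfolding E_def using ij by (intro det_addrow_mat) auto
  have 1: "(C * E) * (E' * Ci) = 1\<^sub>m d"
  proof -
    have "(C * E) * (E' * Ci) = C * (E * (E' * Ci))" using C E by (simp add: assoc_mult_mat[of _ d d _ d _ d])
    also have "\<dots> = C * Ci" using C E EE by (simp add: cancel_mm[of E d])
    finally show ?thesis using C by simp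
  qed
  have 2: "(E' * Ci) * (C * E) = 1\<^sub>m d"
  proof -
    have "(E' * Ci) * (C * E) = E' * (Ci * (C * E))" using C E by (simp add: assoc_mult_mat[of _ d d _ d _ d])
    also have "\<dots> = E' * E" using C E by (simp add: cancel_mm[of Ci d])
    finally show ?thesis using E'E by simp
  qed
  have 3: "det (C * E) = 1" using C E dE by (simp add: det_mult)
  have 4: "(C * E) $$ (d-1, b) = (r(i := r i + c * r j)) b" if b: "b < d" for b
  proof -
    have "(C * E) $$ (d-1, b) = (\<Sum>a\<in>{0..<d}. C $$ (d-1,a) * E $$ (a,b))"
      using C E b ij by (simp add: scalar_prod_def)
    also have "\<dots> = (\<Sum>a\<in>{0..<d}. (if a = b then C $$ (d-1,a) else 0)
                     + (if a = j then (if b = i then c * C $$ (d-1,j) else 0) else 0))"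
      using b ij unfolding E_def by (intro sum.cong) auto
    also have "\<dots> = C $$ (d-1,b) + (if b = i then c * C $$ (d-1,j) else 0)"
      using b ij by (simp add: sum.distrib)
    also have "\<dots> = (r(i := r i + c * r j)) b" using C(6) b ij by (auto simp: mult.commute)
    finally show ?thesis .
  qed
  show ?thesis unfolding P_row_def
    by (rule exI[of _ "C * E"], rule exI[of _ "E' * Ci"]) (use C E 1 2 3 4 in auto)
qed

definition prim :: "nat \<Rightarrow> (nat \<Rightarrow> int) \<Rightarrow> bool" where
  "prim d r \<longleftrightarrow> (\<forall>n::int. (\<forall>i<d. n dvd r i) \<longrightarrow> n = 1 \<or> n = -1)"

lemma P_unit:
  assumes d: "d \<ge> 2" and i: "i < d" and u: "u = 1 \<or> u = -1"
  shows "P_row d (\<lambda>j. if j = i then u else 0)"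
proof -
  let ?e = "\<lambda>j::nat. if j = d-1 then 1 else (0::int)"
  have base: "P_row d ?e" using d by (intro P_base) auto
  have gen: "P_row d (\<lambda>j. if j = i then u else 0)" if i: "i < d" "i \<noteq> d-1" for i
  proof -
    have s1: "P_row d (?e(i := ?e i + u * ?e (d-1)))" by (rule P_step[OF base]) (use i d in auto)
    let ?r = "?e(i := ?e i + u * ?e (d-1))"
    have s2: "P_row d (?r(d-1 := ?r (d-1) + (-u) * ?r i))" by (rule P_step[OF s1]) (use i d in auto)
    show ?thesis
      by (rule P_row_cong[OF s2]) (use u i in auto)
  qed
  show ?thesis
  proof (cases "i = d-1")
    case False
    then show ?thesis using gen i by auto
  next
    case True
    show ?thesis
    proof (cases "u = 1")
      case True
      have "(\<lambda>j. if j = i then u else (0::int)) = (\<lambda>j. if j = d-1 then 1 else 0)"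
        using True \<open>i = d-1\<close> by auto
      then show ?thesis using base by simp
    next
      case False
      hence um: "u = -1" using u by auto
      have g0: "P_row d (\<lambda>j. if j = 0 then -1 else 0)" using gen[of 0] u d um by auto
      let ?f = "\<lambda>j::nat. if j = 0 then -1 else (0::int)"
      have s1: "P_row d (?f(d-1 := ?f (d-1) + 1 * ?f 0))" by (rule P_step[OF g0]) (use d in auto)
      let ?r = "?f(d-1 := ?f (d-1) + 1 * ?f 0)"
      have s2: "P_row d (?r(0 := ?r 0 + (-1) * ?r (d-1)))" by (rule P_step[OF s1]) (use d in auto)
      show ?thesis by (rule P_row_cong[OF s2]) (use um True d in auto)
    qed
  qed
qed

lemma complete_aux:
  assumes d: "d \<ge> 2"
  shows "(\<Sum>k<d. nat \<bar>r k\<bar>) = m \<Longrightarrow> prim d r \<Longrightarrow> P_row d r"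
proof (induction m arbitrary: r rule: less_induct)
  case (less m r)
  show ?case
  proof (cases "\<exists>i j. i < d \<and> j < d \<and> i \<noteq> j \<and> r i \<noteq> 0 \<and> r j \<noteq> 0 \<and> \<bar>r j\<bar> \<le> \<bar>r i\<bar>")
    case True
    then obtain i j where ij: "i < d" "j < d" "i \<noteq> j" "r i \<noteq> 0" "r j \<noteq> 0" "\<bar>r j\<bar> \<le> \<bar>r i\<bar>" by blast
    define s where "s = sgn (r i) * sgn (r j)"
    define r' where "r' = r(i := r i - s * r j)"
    have abs': "\<bar>r' i\<bar> = \<bar>r i\<bar> - \<bar>r j\<bar>"
      unfolding r'_def s_def using ij by (auto simp: sgn_if abs_if)
    have lt: "(\<Sum>k<d. nat \<bar>r' k\<bar>) < m"
    proof -
      have "(\<Sum>k\<in>{..<d}. nat \<bar>r' k\<bar>) < (\<Sum>k\<in>{..<d}. nat \<bar>r k\<bar>)"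
      proof (rule sum_strict_mono_ex1)
        show "\<forall>k\<in>{..<d}. nat \<bar>r' k\<bar> \<le> nat \<bar>r k\<bar>" using abs' unfolding r'_def by auto
        show "\<exists>k\<in>{..<d}. nat \<bar>r' k\<bar> < nat \<bar>r k\<bar>" using abs' ij by (intro bexI[of _ i]) auto
      qed auto
      thus ?thesis using less.prems by simp
    qed
    have pr': "prim d r'" unfolding prim_def
    proof (intro allI impI)
      fix n assume n: "\<forall>k<d. n dvd r' k"
      have "\<forall>k<d. n dvd r k"
      proof (intro allI impI)
        fix k assume k: "k < d"
        show "n dvd r k"
        proof (cases "k = i")
          case True
          have "r i = r' i + s * r' j" unfolding r'_def using ij by simp
          thus ?thesis using n ij True by simp
        next
          case False
          thus ?thesis using n k unfolding r'_def by auto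
        qed
      qed
      thus "n = 1 \<or> n = -1" using less.prems(2) unfolding prim_def by blast
    qed
    have "P_row d r'" using less.IH[OF lt refl pr'] .
    hence "P_row d (r'(i := r' i + s * r' j))" using P_step ij by blast
    moreover have "r'(i := r' i + s * r' j) = r" unfolding r'_def using ij by auto
    ultimately show ?thesis by simp
  next
    case False
    hence F: "\<And>i j. i < d \<Longrightarrow> j < d \<Longrightarrow> i \<noteq> j \<Longrightarrow> r i \<noteq> 0 \<Longrightarrow> r j = 0"
      by (metis linorder_le_cases)
    have "\<exists>i<d. r i \<noteq> 0"
    proof (rule ccontr)
      assume "\<not> ?thesis"
      hence "\<forall>k<d. (2::int) dvd r k" by auto
      hence "(2::int) = 1 \<or> (2::int) = -1" using less.prems(2) unfolding prim_def by blast
      thus False by simp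
    qed
    then obtain i where i: "i < d" "r i \<noteq> 0" by blast
    have rj: "\<And>j. j < d \<Longrightarrow> r j = (if j = i then r i else 0)" using F i by auto
    have "\<forall>k<d. r i dvd r k" using rj by (metis dvd_0_right dvd_refl)
    hence u: "r i = 1 \<or> r i = -1" using less.prems(2) unfolding prim_def by blast
    show ?thesis by (rule P_row_cong[OF P_unit[OF d i(1) u]]) (use rj in auto)
  qed
qed

lemma complete:
  assumes "d \<ge> 2" "prim d r"
  shows "\<exists>C Ci :: int mat. C \<in> carrier_mat d d \<and> Ci \<in> carrier_mat d d \<and>
     C * Ci = 1\<^sub>m d \<and> Ci * C = 1\<^sub>m d \<and> det C = 1 \<and> (\<forall>j<d. C $$ (d-1, j) = r j)"
  using complete_aux[OF assms(1) refl assms(2)] unfolding P_row_def .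


lemma prim_nonzero:
  assumes "primitive d v"
  shows "\<exists>i<d. v $ i \<noteq> 0"
proof (rule ccontr)
  assume "\<not> ?thesis"
  hence "\<forall>i<d. (2::int) dvd v $ i" by auto
  hence "(2::int) = 1 \<or> (2::int) = -1" using assms unfolding primitive_def by blast
  thus False by simp
qed

lemma gv_facts:
  assumes d: "d \<ge> 2" and pv: "primitive d v" and gv: "is_gv d v g"
  shows "g \<in> carrier_mat d d" "adj_mat g \<in> carrier_mat d d" "g * adj_mat g = 1\<^sub>m d"
    "adj_mat g * g = 1\<^sub>m d" "transpose_mat g *\<^sub>v v = unit_vec d (d-1)"
    "\<And>l. l < d \<Longrightarrow> adj_mat g $$ (d-1, l) = v $ l"
proof -
  have g: "g \<in> carrier_mat d d" and dg: "det g = 1" and colv: "\<forall>j<d-1. col g j \<bullet> v = 0"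
    and detpos: "det (mat d d (\<lambda>(i,j). if j < d-1 then g $$ (i,j) else v $ i)) > 0"
    using gv unfolding is_gv_def by auto
  have v: "v \<in> carrier_vec d" using pv unfolding primitive_def by auto
  define H where "H = adj_mat g"
  have H: "H \<in> carrier_mat d d" "g * H = 1\<^sub>m d" "H * g = 1\<^sub>m d"
    using adj_mat[OF g] dg unfolding H_def by auto
  define c where "c = transpose_mat g *\<^sub>v v"
  have c: "c \<in> carrier_vec d" unfolding c_def using g v by (intro mult_mat_vec_carrier[of _ d d]) auto
  have cj: "c $ j = col g j \<bullet> v" if "j < d" for j unfolding c_def using g that by auto
  have c0: "c $ j = 0" if "j < d-1" for j using cj colv that by auto
  have HTc: "transpose_mat H *\<^sub>v c = v"
  proof -
    have "transpose_mat H *\<^sub>v c = (transpose_mat H * transpose_mat g) *\<^sub>v v"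
      unfolding c_def using g H v by (simp add: assoc_mult_mat_vec)
    also have "transpose_mat H * transpose_mat g = 1\<^sub>m d"
      by (metis transpose_mult[OF g H(1)] H(2) transpose_one)
    finally show ?thesis using H v by simp
  qed
  have vl: "v $ l = H $$ (d-1, l) * c $ (d-1)" if l: "l < d" for l
  proof -
    have "v $ l = (transpose_mat H *\<^sub>v c) $ l" using HTc by simp
    also have "\<dots> = (\<Sum>j\<in>{0..<d}. H $$ (j, l) * c $ j)"
      using H c l by (simp add: scalar_prod_def)
    also have "\<dots> = (\<Sum>j\<in>{0..<d}. if j = d-1 then H $$ (d-1, l) * c $ (d-1) else 0)"
      using c0 by (intro sum.cong) auto
    also have "\<dots> = H $$ (d-1, l) * c $ (d-1)" using d by simp
    finally show ?thesis .
  qed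
  define y where "y = H *\<^sub>v v"
  have y: "y \<in> carrier_vec d" unfolding y_def using H v by (intro mult_mat_vec_carrier[of _ d d]) auto
  have gy: "g *\<^sub>v y = v" unfolding y_def using g H v by (simp add: cancel_mv[of g d H])
  have vv: "v \<bullet> v = c $ (d-1) * y $ (d-1)"
  proof -
    have "v \<bullet> v = v \<bullet> (g *\<^sub>v y)" using gy by simp
    also have "\<dots> = (transpose_mat g *\<^sub>v v) \<bullet> y"
      using transpose_vec_mult_scalar[OF g y v] by simp
    also have "\<dots> = (\<Sum>j\<in>{0..<d}. c $ j * y $ j)" unfolding c_def[symmetric] scalar_prod_def
      using y by simp
    also have "\<dots> = (\<Sum>j\<in>{0..<d}. if j = d-1 then c $ (d-1) * y $ (d-1) else 0)"
      using c0 by (intro sum.cong) auto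
    also have "\<dots> = c $ (d-1) * y $ (d-1)" using d by simp
    finally show ?thesis .
  qed
  define Y where "Y = mat d d (\<lambda>(i,j). if j < d-1 then (if i = j then 1 else 0) else y $ i)"
  have Y: "Y \<in> carrier_mat d d" unfolding Y_def by auto
  have ut: "upper_triangular Y" unfolding upper_triangular_def Y_def by auto
  have dY: "det Y = y $ (d-1)"
  proof -
    have "det Y = (\<Prod>i = 0..<d. Y $$ (i,i))"
      using det_upper_triangular[OF ut Y] Y by (simp add: prod_list_diag_prod)
    also have "\<dots> = (\<Prod>i = 0..<d. if i = d-1 then y $ (d-1) else 1)"
      unfolding Y_def by (intro prod.cong) auto
    also have "\<dots> = y $ (d-1)" using d by simp
    finally show ?thesis .
  qed
  have gY: "g * Y = mat d d (\<lambda>(i,j). if j < d-1 then g $$ (i,j) else v $ i)"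
  proof (rule eq_matI)
    fix i j assume ij: "i < dim_row (mat d d (\<lambda>(i,j). if j < d-1 then g $$ (i,j) else v $ i))"
      "j < dim_col (mat d d (\<lambda>(i,j). if j < d-1 then g $$ (i,j) else v $ i))"
    hence ij': "i < d" "j < d" by auto
    show "(g * Y) $$ (i,j) = mat d d (\<lambda>(i,j). if j < d-1 then g $$ (i,j) else v $ i) $$ (i,j)"
    proof (cases "j < d-1")
      case True
      have "col Y j = unit_vec d j" unfolding Y_def using True ij' by (intro eq_vecI) auto
      then show ?thesis using True ij' g Y by simp
    next
      case False
      have "col Y j = y" unfolding Y_def using False ij' y by (intro eq_vecI) auto
      hence "(g * Y) $$ (i,j) = (g *\<^sub>v y) $ i" using ij' g Y by simp
      then show ?thesis using False ij' gy by simp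
    qed
  qed (use g Y in auto)
  have ypos: "y $ (d-1) > 0" using detpos gY det_mult[OF g Y] dg dY by simp
  have vpos: "v \<bullet> v > 0"
  proof -
    obtain i where i: "i < d" "v $ i \<noteq> 0" using prim_nonzero[OF pv] by blast
    have "v \<bullet> v = (\<Sum>j\<in>{0..<d}. (v $ j)^2)" unfolding scalar_prod_def using v
      by (simp add: power2_eq_square)
    also have "\<dots> > 0" using i by (intro sum_pos2[of _ i]) auto
    finally show ?thesis .
  qed
  have cpos: "c $ (d-1) > 0" using vv vpos ypos by (simp add: zero_less_mult_iff)
  have "\<forall>l<d. c $ (d-1) dvd v $ l" using vl by simp
  hence "c $ (d-1) = 1 \<or> c $ (d-1) = -1" using pv unfolding primitive_def by blast
  hence c1: "c $ (d-1) = 1" using cpos by auto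
  show "g \<in> carrier_mat d d" "adj_mat g \<in> carrier_mat d d" "g * adj_mat g = 1\<^sub>m d"
    "adj_mat g * g = 1\<^sub>m d" using g H unfolding H_def by auto
  show "transpose_mat g *\<^sub>v v = unit_vec d (d-1)"
    unfolding c_def[symmetric] using c c0 c1 d by (intro eq_vecI) (auto simp: unit_vec_def)
  show "\<And>l. l < d \<Longrightarrow> adj_mat g $$ (d-1, l) = v $ l" using vl c1 unfolding H_def by simp
qed


lemma map_transpose: "map_mat f (transpose_mat A) = transpose_mat (map_mat f A)"
  by (intro eq_matI) auto

lemma rat_int_mat: "map_mat (of_rat :: rat \<Rightarrow> 'a::field_char_0) (map_mat of_int A) = map_mat of_int A"
  by (intro eq_matI) auto

lemma rat_int_vec: "map_vec (of_rat :: rat \<Rightarrow> 'a::field_char_0) (map_vec of_int v) = map_vec of_int v"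
  by (intro eq_vecI) auto

lemma SO_rat_map:
  assumes b: "b \<in> SO_pts d R"
  shows "map_mat (of_rat :: rat \<Rightarrow> 'a::field_char_0) b \<in> SO_pts d UNIV"
proof -
  have c: "b \<in> carrier_mat d d" "b * transpose_mat b = 1\<^sub>m d" "det b = 1"
    using b unfolding SO_pts_def by auto
  have "map_mat (of_rat :: rat \<Rightarrow> 'a) b * transpose_mat (map_mat of_rat b) =
      map_mat (of_rat :: rat \<Rightarrow> 'a) b * map_mat of_rat (transpose_mat b)"
    by (simp add: map_transpose)
  also have "\<dots> = map_mat (of_rat :: rat \<Rightarrow> 'a) (b * transpose_mat b)"
    by (rule of_rat_hom.mat_hom_mult[symmetric]) (use c in auto)
  also have "\<dots> = map_mat (of_rat :: rat \<Rightarrow> 'a) (1\<^sub>m d)" using c(2) by simp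
  also have "\<dots> = 1\<^sub>m d" by (intro eq_matI) auto
  finally have "map_mat (of_rat :: rat \<Rightarrow> 'a) b * transpose_mat (map_mat of_rat b) = 1\<^sub>m d" .
  thus ?thesis using c unfolding SO_pts_def by (auto simp: entries_UNIV)
qed

lemma H_rat_map:
  assumes b: "b \<in> H_pts d v R" and v: "v \<in> carrier_vec d"
  shows "map_mat (of_rat :: rat \<Rightarrow> 'a::field_char_0) b \<in> H_pts d v UNIV"
proof -
  have c: "b \<in> carrier_mat d d" "b *\<^sub>v map_vec of_int v = map_vec of_int v"
    using b unfolding H_pts_def SO_pts_def by auto
  have "map_vec (of_rat :: rat \<Rightarrow> 'a) (b *\<^sub>v map_vec of_int v)
     = map_mat of_rat b *\<^sub>v map_vec of_rat (map_vec of_int v)"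
    using c v by (intro of_rat_hom.mult_mat_vec_hom[of _ d d]) auto
  hence "map_mat (of_rat :: rat \<Rightarrow> 'a) b *\<^sub>v map_vec of_int v
     = map_vec of_rat (b *\<^sub>v map_vec of_int v)" by (simp add: rat_int_vec)
  also have "\<dots> = map_vec of_int v" using c by (simp add: rat_int_vec)
  finally show ?thesis using SO_rat_map[OF H_D(1)[OF b]] unfolding H_pts_def by auto
qed

lemma rat_vec_inj:
  fixes x y :: "rat vec"
  assumes "map_vec (of_rat :: rat \<Rightarrow> 'a::field_char_0) x = map_vec of_rat y"
  shows "x = y"
proof -
  have "dim_vec x = dim_vec y" using arg_cong[OF assms, of dim_vec] by simp
  moreover have "x $ i = y $ i" if "i < dim_vec y" for i
    using arg_cong[OF assms, of "\<lambda>z. z $ i"] that \<open>dim_vec x = dim_vec y\<close> by simp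
  ultimately show ?thesis by (intro eq_vecI) auto
qed

locale gvloc =
  fixes d :: nat and v :: "int vec" and g :: "int mat"
  assumes d: "d \<ge> 2" and pv: "primitive d v" and gv: "is_gv d v g"
begin

lemma v: "v \<in> carrier_vec d" using pv unfolding primitive_def by auto


lemmas gf = gv_facts[OF d pv gv]

lemma GC: "(map_mat of_int g :: 'a::field_char_0 mat) \<in> carrier_mat d d" using gf by auto
lemma HC: "(map_mat of_int (adj_mat g) :: 'a::field_char_0 mat) \<in> carrier_mat d d" using gf by auto
lemma vvc: "(map_vec of_int v :: 'a::field_char_0 vec) \<in> carrier_vec d" using v by auto

lemma map_int_one: "map_mat (of_int :: int \<Rightarrow> 'a::field_char_0) (1\<^sub>m d) = 1\<^sub>m d"
  by (intro eq_matI) auto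

lemma int_inv_map:
  assumes "A \<in> carrier_mat d d" "B \<in> carrier_mat d d" "A * B = 1\<^sub>m d"
  shows "map_mat (of_int :: int \<Rightarrow> 'a::field_char_0) A * map_mat of_int B = 1\<^sub>m d"
proof -
  have "map_mat (of_int :: int \<Rightarrow> 'a) A * map_mat of_int B = map_mat of_int (A * B)"
    by (rule of_int_hom.mat_hom_mult[symmetric]) (use assms in auto)
  thus ?thesis using assms(3) map_int_one by simp
qed

lemma GH: "(map_mat of_int g :: 'a::field_char_0 mat) * map_mat of_int (adj_mat g) = 1\<^sub>m d"
  using gf int_inv_map by blast
lemma HG: "(map_mat of_int (adj_mat g) :: 'a::field_char_0 mat) * (map_mat of_int g) = 1\<^sub>m d"
  using gf int_inv_map by blast

lemma GTv: "transpose_mat (map_mat of_int g :: 'a::field_char_0 mat) *\<^sub>v (map_vec of_int v) = unit_vec d (d-1)"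
proof -
  have "map_vec (of_int :: int \<Rightarrow> 'a) (transpose_mat g *\<^sub>v v) = map_mat of_int (transpose_mat g) *\<^sub>v (map_vec of_int v)"
    by (rule of_int_hom.mult_mat_vec_hom) (use gf v in auto)
  hence "transpose_mat (map_mat of_int g :: 'a mat) *\<^sub>v (map_vec of_int v) = map_vec of_int (transpose_mat g *\<^sub>v v)"
    by (simp add: map_transpose)
  also have "\<dots> = unit_vec d (d-1)" using gf by (intro eq_vecI) (auto simp: unit_vec_def)
  finally show ?thesis .
qed

lemma Hrow: "l < d \<Longrightarrow> (map_mat of_int (adj_mat g) :: 'a::field_char_0 mat) $$ (d-1, l) = of_int (v $ l)"
  using gf d by simp

lemma row_H_mult:
  assumes X: "X \<in> carrier_mat d d" and j: "j < d"
  shows "((map_mat of_int (adj_mat g) :: 'a::field_char_0 mat) * X) $$ (d-1, j) = (transpose_mat X *\<^sub>v (map_vec of_int v)) $ j"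
proof -
  have "((map_mat of_int (adj_mat g) :: 'a mat) * X) $$ (d-1, j) = (\<Sum>l\<in>{0..<d}. map_mat of_int (adj_mat g) $$ (d-1,l) * X $$ (l, j))"
    using X j d gf by (simp add: scalar_prod_def)
  also have "\<dots> = (\<Sum>l\<in>{0..<d}. X $$ (l, j) * (map_vec of_int v) $ l)"
    using Hrow v by (intro sum.cong) auto
  also have "\<dots> = (transpose_mat X *\<^sub>v (map_vec of_int v)) $ j"
    using X j v by (simp add: scalar_prod_def)
  finally show ?thesis .
qed

lemma conj_lastrow:
  fixes b :: "'a::field_char_0 mat"
  assumes b: "b \<in> carrier_mat d d" and bv: "transpose_mat b *\<^sub>v (map_vec of_int v) = (map_vec of_int v)"
  shows "lastrow d (map_mat of_int (adj_mat g) * b * (map_mat of_int g))"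
  unfolding lastrow_def
proof (intro allI impI)
  fix j assume j: "j < d"
  have "(map_mat of_int (adj_mat g) * b * (map_mat of_int g)) $$ (d-1, j) = ((map_mat of_int (adj_mat g) :: 'a mat) * (b * (map_mat of_int g))) $$ (d-1, j)"
    using b GC HC by (simp add: assoc_mult_mat[of _ d d _ d _ d])
  also have "\<dots> = (transpose_mat (b * (map_mat of_int g)) *\<^sub>v (map_vec of_int v)) $ j"
    using b GC j by (intro row_H_mult) auto
  also have "transpose_mat (b * (map_mat of_int g)) *\<^sub>v (map_vec of_int v) = transpose_mat (map_mat of_int g :: 'a mat) *\<^sub>v (transpose_mat b *\<^sub>v (map_vec of_int v))"
    using b GC vvc by (simp add: transpose_mult[of b d d "map_mat of_int g" d] assoc_mult_mat_vec[of _ d d _ d _])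
  also have "\<dots> = unit_vec d (d-1)" using bv GTv by simp
  finally show "(map_mat of_int (adj_mat g) * b * (map_mat of_int g)) $$ (d-1, j) = (if j = d-1 then 1 else 0)" using j d by simp
qed

lemma conj_det:
  fixes b :: "'a::field_char_0 mat"
  assumes b: "b \<in> carrier_mat d d"
  shows "det (map_mat of_int (adj_mat g) * b * (map_mat of_int g)) = det b"
proof -
  have "det (map_mat of_int (adj_mat g) * map_mat of_int g :: 'a mat) = 1"
    by (simp only: HG det_one)
  hence "det (map_mat of_int (adj_mat g) :: 'a mat) * det (map_mat of_int g) = 1"
    by (metis det_mult[OF HC GC])
  thus ?thesis using det_mult[OF HC b] det_mult[of "map_mat of_int (adj_mat g) * b" d "map_mat of_int g"] b HC GC
    by (simp add: mult.commute mult.left_commute)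
qed

lemma H_conj_ASL:
  fixes b :: "'a::field_char_0 mat"
  assumes b: "b \<in> H_pts d v UNIV"
  shows "lastrow d (map_mat of_int (adj_mat g) * b * (map_mat of_int g))" "det (map_mat of_int (adj_mat g) * b * (map_mat of_int g)) = 1"
proof -
  note S = SO_D[OF H_D(1)[OF b]]
  have "transpose_mat b *\<^sub>v (map_vec of_int v) = (map_vec of_int v)"
    using H_transpose_fix[OF S(1) S(4) vvc] H_D(2)[OF b] by simp
  thus "lastrow d (map_mat of_int (adj_mat g) * b * (map_mat of_int g))" using conj_lastrow S by blast
  show "det (map_mat of_int (adj_mat g) * b * (map_mat of_int g)) = 1" using conj_det[OF S(1)] S(5) by simp
qed

end


section \<open>Real side: k_v, a_v and K\<close>

lemma K_D:
  assumes X: "X \<in> K_grp d" and d: "d \<ge> 1"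
  shows "X \<in> SO_pts d UNIV" "\<And>i. i < d \<Longrightarrow> X $$ (i, d-1) = (if i = d-1 then 1 else 0)"
    "\<And>j. j < d \<Longrightarrow> X $$ (d-1, j) = (if j = d-1 then 1 else 0)"
proof -
  note S = SO_D[OF conjunct1[OF X[unfolded K_grp_def mem_Collect_eq]]]
  have Xe: "X *\<^sub>v unit_vec d (d-1) = unit_vec d (d-1)" using X unfolding K_grp_def by auto
  show "X \<in> SO_pts d UNIV" using X unfolding K_grp_def by auto
  show "\<And>i. i < d \<Longrightarrow> X $$ (i, d-1) = (if i = d-1 then 1 else 0)"
  proof -
    fix i assume i: "i < d"
    have "X $$ (i, d-1) = (X *\<^sub>v unit_vec d (d-1)) $ i" using S(1) i d by simp
    thus "X $$ (i, d-1) = (if i = d-1 then 1 else 0)" using Xe i by (simp add: unit_vec_def)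
  qed
  have XTe: "transpose_mat X *\<^sub>v unit_vec d (d-1) = unit_vec d (d-1)"
    using H_transpose_fix[OF S(1) S(4) _ Xe] by simp
  show "\<And>j. j < d \<Longrightarrow> X $$ (d-1, j) = (if j = d-1 then 1 else 0)"
  proof -
    fix j assume j: "j < d"
    have "X $$ (d-1, j) = (transpose_mat X *\<^sub>v unit_vec d (d-1)) $ j" using S(1) j d by simp
    thus "X $$ (d-1, j) = (if j = d-1 then 1 else 0)" using XTe j by (simp add: unit_vec_def)
  qed
qed

lemma a_v_carrier: "a_v d v \<in> carrier_mat d d" unfolding a_v_def by auto

lemma K_comm:
  assumes X: "X \<in> K_grp d" and d: "d \<ge> 1"
  shows "X * a_v d v = a_v d v * X"
proof -
  note K = K_D[OF X d]
  have Xc: "X \<in> carrier_mat d d" using SO_D[OF K(1)] by auto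
  define f where "f = (\<lambda>i. if i = d-1 then vnorm d v else vnorm d v powr (- 1 / real (d-1)))"
  have a: "a_v d v = mat d d (\<lambda>(i,j). if i = j then f i else 0)"
    unfolding a_v_def f_def by (intro eq_matI) auto
  show ?thesis
  proof (rule eq_matI)
    fix i j assume "i < dim_row (a_v d v * X)" "j < dim_col (a_v d v * X)"
    hence ij: "i < d" "j < d" using Xc by (auto simp: a_v_def)
    have l: "(X * a_v d v) $$ (i,j) = X $$ (i,j) * f j"
    proof -
      have "(X * a_v d v) $$ (i,j) = (\<Sum>l\<in>{0..<d}. X $$ (i,l) * (if l = j then f l else 0))"
        using ij Xc by (simp add: a scalar_prod_def)
      also have "\<dots> = (\<Sum>l\<in>{0..<d}. if l = j then X $$ (i,j) * f j else 0)" by (intro sum.cong) auto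
      finally show ?thesis using ij by simp
    qed
    have r: "(a_v d v * X) $$ (i,j) = f i * X $$ (i,j)"
    proof -
      have "(a_v d v * X) $$ (i,j) = (\<Sum>l\<in>{0..<d}. (if i = l then f i else 0) * X $$ (l,j))"
        using ij Xc by (simp add: a scalar_prod_def)
      also have "\<dots> = (\<Sum>l\<in>{0..<d}. if l = i then f i * X $$ (i,j) else 0)" by (intro sum.cong) auto
      finally show ?thesis using ij by simp
    qed
    show "(X * a_v d v) $$ (i,j) = (a_v d v * X) $$ (i,j)"
    proof (cases "i = d-1 \<longleftrightarrow> j = d-1")
      case True
      hence "f i = f j" unfolding f_def by auto
      then show ?thesis using l r by simp
    next
      case False
      hence "X $$ (i,j) = 0" using K(2)[of i] K(3)[of j] ij by auto
      then show ?thesis using l r by simp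
    qed
  qed (use Xc in \<open>auto simp: a_v_def\<close>)
qed

lemma a_v_det:
  assumes d: "d \<ge> 2" and nv: "vnorm d v > 0"
  shows "det (a_v d v) = 1"
proof -
  define c where "c = vnorm d v powr (- 1 / real (d-1))"
  have ut: "upper_triangular (a_v d v)" unfolding upper_triangular_def a_v_def by auto
  have "det (a_v d v) = (\<Prod>i = 0..<d. a_v d v $$ (i,i))"
    using det_upper_triangular[OF ut a_v_carrier] by (simp add: prod_list_diag_prod a_v_def)
  also have "\<dots> = (\<Prod>i = 0..<d. if i = d-1 then vnorm d v else c)"
    unfolding a_v_def c_def by (intro prod.cong) auto
  also have "\<dots> = (\<Prod>i \<in> {0..<d-1} \<union> {d-1}. if i = d-1 then vnorm d v else c)"
    using d by (intro prod.cong) auto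
  also have "\<dots> = c ^ (d-1) * vnorm d v"
    by (subst prod.union_disjoint) auto
  also have "c ^ (d-1) = c powr (real (d-1))"
    unfolding c_def by (rule powr_realpow[symmetric]) (use nv in simp)
  also have "\<dots> = vnorm d v powr (- 1 / real (d-1) * real (d-1))"
    unfolding c_def by (rule powr_powr)
  also have "- 1 / real (d-1) * real (d-1) = -1" using d by simp
  finally show ?thesis using nv by (simp add: powr_neg_one)
qed

lemma a_v_row:
  assumes X: "X \<in> carrier_mat d n" and j: "j < n" and d: "d \<ge> 1"
  shows "(a_v d v * X) $$ (d-1, j) = vnorm d v * X $$ (d-1, j)"
proof -
  have "(a_v d v * X) $$ (d-1, j) = (\<Sum>l\<in>{0..<d}. a_v d v $$ (d-1, l) * X $$ (l, j))"
    using X j d by (simp add: scalar_prod_def a_v_def)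
  also have "\<dots> = (\<Sum>l\<in>{0..<d}. if l = d-1 then vnorm d v * X $$ (d-1, j) else 0)"
    using d by (intro sum.cong) (auto simp: a_v_def)
  finally show ?thesis using d by simp
qed

locale kloc = gvloc +
  fixes k :: "real mat"
  assumes kv: "is_kv d v k"
begin

lemma nv: "vnorm d v > 0"
proof -
  obtain i where i: "i < d" "v $ i \<noteq> 0" using prim_nonzero[OF pv] by blast
  have "(\<Sum>j<d. (real_of_int (v $ j))\<^sup>2) > 0" using i by (intro sum_pos2[of _ i]) auto
  thus ?thesis unfolding vnorm_def by simp
qed

lemma kS: "k \<in> SO_pts d UNIV" using kv unfolding is_kv_def by auto
lemmas kD = SO_D[OF kS]
lemma kvv: "k *\<^sub>v map_vec of_int v = vnorm d v \<cdot>\<^sub>v unit_vec d (d-1)"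
  using kv unfolding is_kv_def by auto

lemma kTe: "transpose_mat k *\<^sub>v unit_vec d (d-1) = (1 / vnorm d v) \<cdot>\<^sub>v map_vec of_int v"
proof -
  have "map_vec of_int v = transpose_mat k *\<^sub>v (k *\<^sub>v map_vec of_int v)"
    using cancel_mv[of "transpose_mat k" d k "map_vec of_int v"] kD vvc by simp
  also have "\<dots> = vnorm d v \<cdot>\<^sub>v (transpose_mat k *\<^sub>v unit_vec d (d-1))"
    unfolding kvv using kD by (intro mult_mat_vec[of _ d d]) auto
  finally have "map_vec of_int v = vnorm d v \<cdot>\<^sub>v (transpose_mat k *\<^sub>v unit_vec d (d-1))" .
  hence "(1 / vnorm d v) \<cdot>\<^sub>v map_vec of_int v = (1 / vnorm d v) \<cdot>\<^sub>v (vnorm d v \<cdot>\<^sub>v (transpose_mat k *\<^sub>v unit_vec d (d-1)))"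
    by simp
  also have "\<dots> = transpose_mat k *\<^sub>v unit_vec d (d-1)" using nv by (simp add: smult_smult_assoc)
  finally show ?thesis by simp
qed

lemma krow: "l < d \<Longrightarrow> k $$ (d-1, l) = real_of_int (v $ l) / vnorm d v"
proof -
  assume l: "l < d"
  have "k $$ (d-1, l) = (transpose_mat k *\<^sub>v unit_vec d (d-1)) $ l" using kD l d by simp
  also have "\<dots> = real_of_int (v $ l) / vnorm d v" unfolding kTe using l v by simp
  finally show ?thesis .
qed

lemma conjK:
  assumes h: "h \<in> H_pts d v UNIV"
  shows "k * h * transpose_mat k \<in> K_grp d"
proof -
  note hS = H_D(1)[OF h] and hc = SO_D[OF H_D(1)[OF h]]
  have S: "k * h * transpose_mat k \<in> SO_pts d UNIV"
    by (intro SO_mult subr_UNIV kS hS SO_transpose)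
  have "(k * h * transpose_mat k) *\<^sub>v unit_vec d (d-1) = k *\<^sub>v (h *\<^sub>v (transpose_mat k *\<^sub>v unit_vec d (d-1)))"
    using kD hc by (simp add: assoc_mult_mat_vec[of _ d d _ d _])
  also have "\<dots> = k *\<^sub>v (h *\<^sub>v ((1 / vnorm d v) \<cdot>\<^sub>v map_vec of_int v))" unfolding kTe ..
  also have "\<dots> = (1 / vnorm d v) \<cdot>\<^sub>v (k *\<^sub>v (h *\<^sub>v map_vec of_int v))"
    using kD hc vvc by (simp add: mult_mat_vec[of _ d d])
  also have "\<dots> = unit_vec d (d-1)" using H_D(2)[OF h] kvv nv by (simp add: smult_smult_assoc)
  finally show ?thesis using S unfolding K_grp_def by auto
qed

lemma conjH:
  assumes X: "X \<in> K_grp d"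
  shows "transpose_mat k * X * k \<in> H_pts d v UNIV"
proof -
  have d1: "d \<ge> 1" using d by simp
  note K = K_D[OF X d1] and Xc = SO_D[OF K_D(1)[OF X d1]]
  have S: "transpose_mat k * X * k \<in> SO_pts d UNIV"
    by (intro SO_mult subr_UNIV kS K(1) SO_transpose)
  have Xe: "X *\<^sub>v unit_vec d (d-1) = unit_vec d (d-1)" using X unfolding K_grp_def by auto
  have "(transpose_mat k * X * k) *\<^sub>v map_vec of_int v = transpose_mat k *\<^sub>v (X *\<^sub>v (k *\<^sub>v map_vec of_int v))"
    using kD Xc vvc by (simp add: assoc_mult_mat_vec[of _ d d _ d _])
  also have "\<dots> = vnorm d v \<cdot>\<^sub>v (transpose_mat k *\<^sub>v (X *\<^sub>v unit_vec d (d-1)))"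
    unfolding kvv using kD Xc by (simp add: mult_mat_vec[of _ d d])
  also have "\<dots> = map_vec of_int v" unfolding Xe kTe using nv by (simp add: smult_smult_assoc)
  finally show ?thesis using S unfolding H_pts_def by auto
qed

lemma akG_lastrow: "lastrow d (a_v d v * k * map_mat of_int g)"
  unfolding lastrow_def
proof (intro allI impI)
  fix j assume j: "j < d"
  have "(a_v d v * k * map_mat of_int g) $$ (d-1, j) = (a_v d v * (k * map_mat of_int g)) $$ (d-1, j)"
    using kD GC a_v_carrier by (simp add: assoc_mult_mat[of _ d d _ d _ d])
  also have "\<dots> = vnorm d v * (k * map_mat of_int g) $$ (d-1, j)"
    using kD GC j d by (intro a_v_row[of _ _ d]) auto
  also have "(k * map_mat of_int g) $$ (d-1, j) = (\<Sum>l\<in>{0..<d}. k $$ (d-1, l) * real_of_int (g $$ (l, j)))"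
    using kD GC j d gf by (simp add: scalar_prod_def)
  also have "\<dots> = (1 / vnorm d v) * (\<Sum>l\<in>{0..<d}. real_of_int (g $$ (l, j)) * real_of_int (v $ l))"
    using krow by (simp add: sum_distrib_left ac_simps)
  also have "(\<Sum>l\<in>{0..<d}. real_of_int (g $$ (l, j)) * real_of_int (v $ l))
      = (transpose_mat (map_mat of_int g :: real mat) *\<^sub>v map_vec of_int v) $ j"
    using j gf v by (simp add: scalar_prod_def)
  also have "\<dots> = (if j = d-1 then 1 else 0)" using GTv[where 'a = real] j by simp
  finally show "(a_v d v * k * map_mat of_int g) $$ (d-1, j) = (if j = d-1 then 1 else 0)"
    using nv by simp
qed

lemma akG_det: "det (a_v d v * k * map_mat of_int g) = 1"
proof -
  have "det (map_mat of_int g :: real mat) = 1"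
    using gv unfolding is_gv_def by simp
  thus ?thesis using det_mult[OF a_v_carrier[of d v] kD(1)] det_mult[of "a_v d v * k" d "map_mat of_int g"]
      a_v_det[OF d nv] kD GC a_v_carrier[of d v] by simp
qed

end


section \<open>Gamma and cosets\<close>

lemma ASL_mult:
  assumes R: "subr R" and a: "a \<in> ASL_pts d R" and b: "b \<in> ASL_pts d R" and d: "d \<ge> 1"
  shows "a * b \<in> ASL_pts d R"
proof -
  note A = ASL_D[OF a d] and B = ASL_D[OF b d]
  have c: "a * b \<in> carrier_mat d d" using A B by (simp add: mult_carrier_mat[of _ d d])
  have dt: "det (a * b) = 1" using det_mult[OF A(1) B(1)] A B by simp
  show ?thesis
    by (rule ASL_intro[OF c entries_mult[OF R A(1) B(1) A(2) B(2)] lastrow_mult[OF A(1) A(3) B(1) B(3) d] dt d])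
qed

lemma ASL_one: "subr R \<Longrightarrow> d \<ge> 1 \<Longrightarrow> 1\<^sub>m d \<in> ASL_pts d R"
  by (rule ASL_intro) (auto simp: entries_one lastrow_def)

lemma Gamma_mult:
  assumes "d \<ge> 1" "(a1, a2) \<in> Gamma p d" "(b1, b2) \<in> Gamma p d"
  shows "(a1 * b1, a2 * b2) \<in> Gamma p d"
  using assms SO_mult[OF subr_Zinvp] ASL_mult[OF subr_Zinvp] unfolding Gamma_def by auto

lemma Gamma_one: "d \<ge> 1 \<Longrightarrow> (1\<^sub>m d, 1\<^sub>m d) \<in> Gamma p d"
  unfolding Gamma_def using SO_one[OF subr_Zinvp] ASL_one[OF subr_Zinvp] by auto

definition pcar :: "nat \<Rightarrow> 'k::field_char_0 pt \<Rightarrow> bool" where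
  "pcar d x \<longleftrightarrow> fst (fst x) \<in> carrier_mat d d \<and> snd (fst x) \<in> carrier_mat d d \<and>
                 fst (snd x) \<in> carrier_mat d d \<and> snd (snd x) \<in> carrier_mat d d"

lemma Gamma_carrier: "(a, b) \<in> Gamma p d \<Longrightarrow> a \<in> carrier_mat d d \<and> b \<in> carrier_mat d d"
  unfolding Gamma_def SO_pts_def ASL_pts_def by auto

lemma map_rat_mult:
  assumes "A \<in> carrier_mat d d" "B \<in> carrier_mat d d"
  shows "map_mat (of_rat :: rat \<Rightarrow> 'a::field_char_0) (A * B) = map_mat of_rat A * map_mat of_rat B"
  by (rule of_rat_hom.mat_hom_mult) (use assms in auto)

lemma map_rat_one: "map_mat (of_rat :: rat \<Rightarrow> 'a::field_char_0) (1\<^sub>m d) = 1\<^sub>m d"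
  by (intro eq_matI) auto

lemma ptmul_diag:
  assumes x: "pcar d x" and a: "a1 \<in> carrier_mat d d" "a2 \<in> carrier_mat d d"
    and b: "b1 \<in> carrier_mat d d" "b2 \<in> carrier_mat d d"
  shows "ptmul (ptmul x (diag_emb (a1, a2))) (diag_emb (b1, b2)) = ptmul x (diag_emb (a1 * b1, a2 * b2))"
proof -
  obtain x1 x2 x3 x4 where xx: "x = ((x1, x2), (x3, x4))" by (metis prod.collapse)
  show ?thesis using x a b unfolding xx pcar_def by (simp add: map_rat_mult assoc_mult_mat[of _ d d _ d _ d])
qed

lemma ptmul_one:
  assumes x: "pcar d x"
  shows "ptmul x (diag_emb (1\<^sub>m d, 1\<^sub>m d)) = x"
proof -
  obtain x1 x2 x3 x4 where xx: "x = ((x1, x2), (x3, x4))" by (metis prod.collapse)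
  show ?thesis using x unfolding xx pcar_def by (simp add: map_rat_one right_mult_one_mat[of _ d d])
qed

lemma pcar_mul: "pcar d x \<Longrightarrow> (a, b) \<in> Gamma p d \<Longrightarrow> pcar d (ptmul x (diag_emb (a, b)))"
proof -
  assume x: "pcar d x" and g: "(a, b) \<in> Gamma p d"
  obtain x1 x2 x3 x4 where xx: "x = ((x1, x2), (x3, x4))" by (metis prod.collapse)
  show ?thesis using x Gamma_carrier[OF g] unfolding xx pcar_def by (simp add: mult_carrier_mat[of _ d d])
qed

lemma self_in_coset: "d \<ge> 1 \<Longrightarrow> pcar d x \<Longrightarrow> x \<in> coset p d x"
proof -
  assume d: "d \<ge> 1" and x: "pcar d x"
  have "x = ptmul x (diag_emb (1\<^sub>m d, 1\<^sub>m d))" using ptmul_one[OF x] by simp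
  moreover have "(1\<^sub>m d, 1\<^sub>m d) \<in> Gamma p d" using Gamma_one[OF d] by simp
  ultimately show "x \<in> coset p d x" unfolding coset_def by blast
qed

lemma coset_eqD:
  assumes "coset p d x = coset p d y" "d \<ge> 1" "pcar d x"
  shows "\<exists>a b. (a, b) \<in> Gamma p d \<and> x = ptmul y (diag_emb (a, b))"
proof -
  have "x \<in> coset p d y" using self_in_coset[OF assms(2,3), of p] assms(1) by simp
  thus ?thesis unfolding coset_def by auto
qed

lemma coset_shift:
  assumes d: "d \<ge> 1" and y: "pcar d y" and g: "(a1, a2) \<in> Gamma p d" and gi: "(b1, b2) \<in> Gamma p d"
    and i1: "b1 * a1 = 1\<^sub>m d" and i2: "b2 * a2 = 1\<^sub>m d"
  shows "coset p d (ptmul y (diag_emb (a1, a2))) = coset p d y"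
proof
  have ca: "a1 \<in> carrier_mat d d" "a2 \<in> carrier_mat d d" using Gamma_carrier[OF g] by auto
  have cb: "b1 \<in> carrier_mat d d" "b2 \<in> carrier_mat d d" using Gamma_carrier[OF gi] by auto
  show "coset p d (ptmul y (diag_emb (a1, a2))) \<subseteq> coset p d y"
  proof
    fix z assume "z \<in> coset p d (ptmul y (diag_emb (a1, a2)))"
    then obtain c where c: "c \<in> Gamma p d" "z = ptmul (ptmul y (diag_emb (a1, a2))) (diag_emb c)"
      unfolding coset_def by auto
    obtain c1 c2 where cc: "c = (c1, c2)" by fastforce
    have "c1 \<in> carrier_mat d d" "c2 \<in> carrier_mat d d" using Gamma_carrier[of c1 c2 p d] c cc by auto
    hence "z = ptmul y (diag_emb (a1 * c1, a2 * c2))"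
      using c cc ptmul_diag[OF y ca] by auto
    moreover have "(a1 * c1, a2 * c2) \<in> Gamma p d" using Gamma_mult[OF d g] c cc by auto
    ultimately show "z \<in> coset p d y" unfolding coset_def by blast
  qed
  show "coset p d y \<subseteq> coset p d (ptmul y (diag_emb (a1, a2)))"
  proof
    fix z assume "z \<in> coset p d y"
    then obtain c where c: "c \<in> Gamma p d" "z = ptmul y (diag_emb c)"
      unfolding coset_def by auto
    obtain c1 c2 where cc: "c = (c1, c2)" by fastforce
    have ccar: "c1 \<in> carrier_mat d d" "c2 \<in> carrier_mat d d" using Gamma_carrier[of c1 c2 p d] c cc by auto
    have "ptmul (ptmul y (diag_emb (a1, a2))) (diag_emb (b1 * c1, b2 * c2))
        = ptmul y (diag_emb (a1 * (b1 * c1), a2 * (b2 * c2)))"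
      using ptmul_diag[OF y] ca cb ccar c cc by auto
    also have "a1 * (b1 * c1) = c1"
    proof -
      have "a1 * b1 = 1\<^sub>m d" using mat_mult_left_right_inverse[of b1 d a1] i1 ca cb by auto
      thus ?thesis using cancel_mm[of a1 d b1 c1 d] ca cb ccar by simp
    qed
    also have "a2 * (b2 * c2) = c2"
    proof -
      have "a2 * b2 = 1\<^sub>m d" using mat_mult_left_right_inverse[of b2 d a2] i2 ca cb by auto
      thus ?thesis using cancel_mm[of a2 d b2 c2 d] ca cb ccar by simp
    qed
    finally have "z = ptmul (ptmul y (diag_emb (a1, a2))) (diag_emb (b1 * c1, b2 * c2))"
      using c cc by simp
    moreover have "(b1 * c1, b2 * c2) \<in> Gamma p d" using Gamma_mult[OF d gi] c cc by auto
    ultimately show "z \<in> coset p d (ptmul y (diag_emb (a1, a2)))" unfolding coset_def by blast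
  qed
qed


lemma cancel_d:
  fixes A :: "'a::comm_ring_1 mat"
  shows "A \<in> carrier_mat d d \<Longrightarrow> B \<in> carrier_mat d d \<Longrightarrow> A * B = 1\<^sub>m d \<Longrightarrow> X \<in> carrier_mat d d \<Longrightarrow> A * (B * X) = X"
  using cancel_mm[of A d B X d] by simp

locale mainloc = kloc d v g k + qp p absv
  for d v g k p and absv :: "'k::field_char_0 \<Rightarrow> real" +
  fixes M :: "'k mat set"
  assumes rep: "is_rep_set p d v absv M"
begin

lemma d1: "d \<ge> 1" using d by simp

lemmas mm = assoc_mult_mat[of _ d d _ d _ d] mult_carrier_mat[of _ d d _ d]
  left_mult_one_mat[of _ d d] right_mult_one_mat[of _ d d]

lemma M_H: "h \<in> M \<Longrightarrow> h \<in> H_pts d v UNIV" using rep unfolding is_rep_set_def by auto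

lemma H_car: "h \<in> H_pts d v R \<Longrightarrow> h \<in> carrier_mat d d"
  unfolding H_pts_def SO_pts_def by auto

lemma conj_eq:
  fixes m b :: "'a::field_char_0 mat"
  assumes "m \<in> carrier_mat d d" "map_mat of_int g * m = b * map_mat of_int g" "b \<in> carrier_mat d d"
  shows "m = map_mat of_int (adj_mat g) * (b * map_mat of_int g)"
proof -
  have "m = map_mat of_int (adj_mat g) * (map_mat of_int g * m)"
    using cancel_d[OF HC GC HG assms(1)] by simp
  thus ?thesis using assms(2) by simp
qed

lemma kcomm_d: "X \<in> K_grp d \<Longrightarrow> Y \<in> carrier_mat d d \<Longrightarrow> a_v d v * (X * Y) = X * (a_v d v * Y)"
proof -
  assume X: "X \<in> K_grp d" and Y: "Y \<in> carrier_mat d d"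
  have Xc: "X \<in> carrier_mat d d" using SO_D(1)[OF K_D(1)[OF X d1]] .
  have "a_v d v * (X * Y) = (a_v d v * X) * Y" using Xc Y a_v_carrier[of d v] by (simp add: mm)
  also have "\<dots> = (X * a_v d v) * Y" using K_comm[OF X d1] by simp
  also have "\<dots> = X * (a_v d v * Y)" using Xc Y a_v_carrier[of d v] by (simp add: mm)
  finally show ?thesis .
qed

lemma O_vph_sub_O_vp:
  assumes h: "h \<in> M"
  shows "O_vph p d v g k absv h \<subseteq> O_vp p d v g k TYPE('k)"
proof
  fix C assume "C \<in> O_vph p d v g k absv h"
  then obtain y m where C: "C = coset p d (ptmul y ((k, h), (a_v d v * k * map_mat of_int g, m)))"
    and y: "y \<in> DK_L d v g absv" and m: "m \<in> carrier_mat d d" "map_mat of_int g * m = h * map_mat of_int g"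
    unfolding O_vph_def by blast
  from y obtain k' a' m' where yy: "y = ((k', a'), (k', m'))" and k': "k' \<in> K_grp d"
    and a': "a' \<in> H_pts d v (Zp absv)" and m': "m' \<in> carrier_mat d d" "map_mat of_int g * m' = a' * map_mat of_int g"
    unfolding DK_L_def by blast
  have hH: "h \<in> H_pts d v UNIV" using M_H[OF h] .
  have hc: "h \<in> carrier_mat d d" using H_car[OF hH] .
  have a'c: "a' \<in> carrier_mat d d" using H_car[OF a'] .
  have k'c: "k' \<in> carrier_mat d d" using SO_D(1)[OF K_D(1)[OF k' d1]] .
  note kc = kD(1)
  have mq: "m = map_mat of_int (adj_mat g) * (h * map_mat of_int g)" using conj_eq[OF m(1,2) hc] .
  have m'q: "m' = map_mat of_int (adj_mat g) * (a' * map_mat of_int g)" using conj_eq[OF m'(1,2) a'c] .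
  define h1 where "h1 = transpose_mat k * k' * k"
  have h1H: "h1 \<in> H_pts d v UNIV" unfolding h1_def using conjH[OF k'] .
  have h1c: "h1 \<in> carrier_mat d d" using H_car[OF h1H] .
  let ?l = "((h1, a' * h), (map_mat of_int (adj_mat g) * h1 * map_mat of_int g, m' * m))"
  have Gr: "(map_mat of_int g :: real mat) \<in> carrier_mat d d" by (rule GC)
  have Hr: "(map_mat of_int (adj_mat g) :: real mat) \<in> carrier_mat d d" by (rule HC)
  have Gk: "(map_mat of_int g :: 'k mat) \<in> carrier_mat d d" by (rule GC)
  have Hk: "(map_mat of_int (adj_mat g) :: 'k mat) \<in> carrier_mat d d" by (rule HC)
  note cancels = cancel_d[OF kc _ kD(3)] cancel_d[OF GC HC GH] cancel_d[OF HC GC HG]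
  have l: "?l \<in> L_RQp d v g"
  proof -
    have 1: "a' * h \<in> H_pts d v UNIV" using H_mult[OF subr_UNIV H_mono[OF _ a'] hH v] by simp
    have 2: "map_mat of_int g * (map_mat of_int (adj_mat g) * h1 * map_mat of_int g) = h1 * (map_mat of_int g :: real mat)"
      using Gr Hr h1c by (simp add: mm cancels)
    have 3: "map_mat of_int g * (m' * m) = a' * h * (map_mat of_int g :: 'k mat)"
      unfolding mq m'q using Gk Hk a'c hc by (simp add: mm cancels)
    show ?thesis unfolding L_RQp_def using h1H 1 2 3 Gr Hr h1c m m' by (auto simp: mm)
  qed
  have eq: "ptmul ((k, 1\<^sub>m d), (a_v d v * k * map_mat of_int g, 1\<^sub>m d)) ?l
          = ptmul y ((k, h), (a_v d v * k * map_mat of_int g, m))"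
  proof -
    have e1: "k * h1 = k' * k" unfolding h1_def using kc k'c by (simp add: mm cancels)
    have e2: "a_v d v * k * map_mat of_int g * (map_mat of_int (adj_mat g) * h1 * map_mat of_int g)
        = k' * (a_v d v * k * map_mat of_int g)"
      unfolding h1_def using kc k'c Gr Hr a_v_carrier[of d v] by (simp add: mm cancels kcomm_d[OF k'])
    show ?thesis unfolding yy using e1 e2 a'c hc m m' by (simp add: mm)
  qed
  show "C \<in> O_vp p d v g k TYPE('k)" unfolding O_vp_def C
    by (rule CollectI, rule exI[of _ ?l]) (use l eq in simp)
qed

end


context mainloc
begin

lemma map_rat_conj:
  assumes b: "b \<in> carrier_mat d d"
  shows "map_mat (of_rat :: rat \<Rightarrow> 'a::field_char_0) (map_mat of_int (adj_mat g) * b * map_mat of_int g)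
     = map_mat of_int (adj_mat g) * map_mat of_rat b * map_mat of_int g"
proof -
  have Hq: "(map_mat of_int (adj_mat g) :: rat mat) \<in> carrier_mat d d" by (rule HC)
  have Gq: "(map_mat of_int g :: rat mat) \<in> carrier_mat d d" by (rule GC)
  have "map_mat (of_rat :: rat \<Rightarrow> 'a) (map_mat of_int (adj_mat g) * b * map_mat of_int g)
     = map_mat of_rat (map_mat of_int (adj_mat g) * b) * map_mat of_rat (map_mat of_int g)"
    using Hq Gq b by (intro map_rat_mult) (auto simp: mm)
  also have "map_mat (of_rat :: rat \<Rightarrow> 'a) (map_mat of_int (adj_mat g) * b)
      = map_mat of_rat (map_mat of_int (adj_mat g)) * map_mat of_rat b"
    using Hq b by (intro map_rat_mult) auto
  finally show ?thesis by (simp add: rat_int_mat)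
qed

lemma conj_Gamma:
  assumes b: "b \<in> H_pts d v (Zinvp p)"
  shows "(b, map_mat of_int (adj_mat g) * b * map_mat of_int g) \<in> Gamma p d"
proof -
  have bS: "b \<in> SO_pts d (Zinvp p)" using H_D(1)[OF b] .
  have bU: "b \<in> H_pts d v UNIV" using H_mono[OF _ b] by simp
  have bc: "b \<in> carrier_mat d d" using SO_D(1)[OF bS] .
  have Hq: "(map_mat of_int (adj_mat g) :: rat mat) \<in> carrier_mat d d" by (rule HC)
  have Gq: "(map_mat of_int g :: rat mat) \<in> carrier_mat d d" by (rule GC)
  have e: "entries_in d (Zinvp p) (map_mat of_int (adj_mat g) * b * map_mat of_int g)"
    using Hq Gq bc SO_D(2)[OF bS]
    by (intro entries_mult[OF subr_Zinvp] entries_of_int[OF subr_Zinvp]) (auto simp: mm)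
  have "map_mat of_int (adj_mat g) * b * map_mat of_int g \<in> ASL_pts d (Zinvp p)"
    using H_conj_ASL[OF bU] e Hq Gq bc d1 by (intro ASL_intro) (auto simp: mm)
  thus ?thesis using bS unfolding Gamma_def by auto
qed

lemma LHS_sub:
  assumes C1: "C \<in> O_vp p d v g k TYPE('k)" and C2: "C \<in> U_set p d absv"
  shows "\<exists>h\<in>M0 p d absv M. C \<in> O_vph p d v g k absv h"
proof -
  obtain l where C: "C = coset p d (ptmul ((k, 1\<^sub>m d), (a_v d v * k * map_mat of_int g, 1\<^sub>m d)) l)"
    and l: "l \<in> L_RQp d v g"
    using C1 unfolding O_vp_def by blast
  obtain h1 h2 m1 m2 where ll: "l = ((h1, h2), (m1, m2))" and h1: "h1 \<in> H_pts d v UNIV"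
    and h2: "h2 \<in> H_pts d v UNIV" and m12: "m1 \<in> carrier_mat d d" "m2 \<in> carrier_mat d d"
    "map_mat of_int g * m1 = h1 * map_mat of_int g" "map_mat of_int g * m2 = h2 * map_mat of_int g"
    using l unfolding L_RQp_def by blast
  have h1c: "h1 \<in> carrier_mat d d" using H_car[OF h1] .
  have h2c: "h2 \<in> carrier_mat d d" using H_car[OF h2] .
  note kc = kD(1)
  have Gr: "(map_mat of_int g :: real mat) \<in> carrier_mat d d" by (rule GC)
  have Hr: "(map_mat of_int (adj_mat g) :: real mat) \<in> carrier_mat d d" by (rule HC)
  have Gk: "(map_mat of_int g :: 'k mat) \<in> carrier_mat d d" by (rule GC)
  have Hk: "(map_mat of_int (adj_mat g) :: 'k mat) \<in> carrier_mat d d" by (rule HC)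
  have m1q: "m1 = map_mat of_int (adj_mat g) * (h1 * map_mat of_int g)" using conj_eq[OF m12(1,3) h1c] .
  have m2q: "m2 = map_mat of_int (adj_mat g) * (h2 * map_mat of_int g)" using conj_eq[OF m12(2,4) h2c] .
  define x where "x = ptmul ((k, 1\<^sub>m d), (a_v d v * k * map_mat of_int g, 1\<^sub>m d)) l"
  have x: "x = ((k * h1, h2), (a_v d v * k * map_mat of_int g * m1, m2))"
    unfolding x_def ll using h2c m12 by (simp add: mm)
  have xc: "pcar d x" unfolding x pcar_def using kc h1c h2c m12 a_v_carrier[of d v] Gr by (simp add: mm)
  obtain y where y: "y \<in> G_RZp d absv" and Cy: "C = coset p d y"
    using C2 unfolding U_set_def by blast
  obtain ya yb yc ye where yy: "y = ((ya, yb), (yc, ye))" by (metis prod.collapse)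
  have yb: "yb \<in> SO_pts d (Zp absv)" using y unfolding yy G_RZp_def by auto
  obtain g1 g2 where gam: "(g1, g2) \<in> Gamma p d" and xy: "x = ptmul y (diag_emb (g1, g2))"
    using coset_eqD[OF _ d1 xc, of p y] C Cy unfolding x_def by auto
  have g1: "g1 \<in> SO_pts d (Zinvp p)" using gam unfolding Gamma_def by auto
  have h2eq: "h2 = yb * map_mat of_rat g1" using xy unfolding x yy by simp
  obtain h where hM: "h \<in> M" and h2d: "h2 \<in> dcoset p d v absv h"
    using rep h2 unfolding is_rep_set_def by blast
  obtain a' \<beta> where a': "a' \<in> H_pts d v (Zp absv)" and \<beta>: "\<beta> \<in> H_pts d v (Zinvp p)"
    and h2q: "h2 = a' * h * map_mat of_rat \<beta>"
    using h2d unfolding dcoset_def by blast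
  have hH: "h \<in> H_pts d v UNIV" using M_H[OF hM] .
  have hc: "h \<in> carrier_mat d d" using H_car[OF hH] .
  have a'S: "a' \<in> SO_pts d (Zp absv)" using H_D(1)[OF a'] .
  note a'D = SO_D[OF a'S]
  have \<beta>S: "\<beta> \<in> SO_pts d (Zinvp p)" using H_D(1)[OF \<beta>] .
  note \<beta>D = SO_D[OF \<beta>S]
  have \<beta>k: "(map_mat of_rat \<beta> :: 'k mat) \<in> SO_pts d UNIV" using SO_rat_map[OF \<beta>S] .
  note \<beta>kD = SO_D[OF \<beta>k]
  have \<beta>rH: "(map_mat of_rat \<beta> :: real mat) \<in> H_pts d v UNIV" using H_rat_map[OF \<beta> v] .
  note \<beta>rD = SO_D[OF H_D(1)[OF \<beta>rH]]
  note cancels = cancel_d[OF kc _ kD(3)] cancel_d[OF _ kc kD(4)] cancel_d[OF GC HC GH] cancel_d[OF HC GC HG]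
    cancel_d[OF _ a'D(1) a'D(4)] cancel_d[OF \<beta>kD(1) _ \<beta>kD(3)] cancel_d[OF _ \<beta>rD(1) \<beta>rD(4)]
  have hM0: "h \<in> M0 p d absv M"
  proof -
    have A: "transpose_mat a' * yb \<in> SO_pts d (Zp absv)"
      using SO_mult[OF subr_Zp SO_transpose[OF a'S] yb] .
    have B: "g1 * transpose_mat \<beta> \<in> SO_pts d (Zinvp p)"
      using SO_mult[OF subr_Zinvp g1 SO_transpose[OF \<beta>S]] .
    have g1c: "g1 \<in> carrier_mat d d" using SO_D(1)[OF g1] .
    have ybc: "yb \<in> carrier_mat d d" using SO_D(1)[OF yb] .
    have "transpose_mat a' * yb * map_mat of_rat (g1 * transpose_mat \<beta>)
        = transpose_mat a' * (yb * map_mat of_rat g1) * transpose_mat (map_mat of_rat \<beta>)"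
      using g1c \<beta>D(1) ybc a'D(1) by (simp add: map_rat_mult map_transpose mm)
    also have "\<dots> = transpose_mat a' * (a' * h * map_mat of_rat \<beta>) * transpose_mat (map_mat of_rat \<beta>)"
      using h2eq h2q by simp
    also have "\<dots> = h" using a'D(1) hc \<beta>kD(1) by (simp add: mm cancels \<beta>kD(3))
    finally show ?thesis unfolding M0_def using hM A B by blast
  qed
  define k' where "k' = k * (h1 * transpose_mat (map_mat of_rat \<beta>)) * transpose_mat k"
  have k': "k' \<in> K_grp d" unfolding k'_def
    by (rule conjK, rule H_mult[OF subr_UNIV h1 H_transpose[OF \<beta>rH v] v])
  have k'c: "k' \<in> carrier_mat d d" using SO_D(1)[OF K_D(1)[OF k' d1]] .
  define m' where "m' = map_mat of_int (adj_mat g) * a' * (map_mat of_int g :: 'k mat)"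
  define m where "m = map_mat of_int (adj_mat g) * h * (map_mat of_int g :: 'k mat)"
  have m'c: "m' \<in> carrier_mat d d" unfolding m'_def using Hk Gk a'D(1) by (simp add: mm)
  have mc: "m \<in> carrier_mat d d" unfolding m_def using Hk Gk hc by (simp add: mm)
  have y': "((k', a'), (k', m')) \<in> DK_L d v g absv"
    unfolding DK_L_def using k' a' m'c Gk Hk a'D(1) by (auto simp: m'_def mm cancels)
  have mG: "map_mat of_int g * m = h * map_mat of_int g"
    unfolding m_def using Gk Hk hc by (simp add: mm cancels)
  define w where "w = ptmul ((k', a'), (k', m')) ((k, h), (a_v d v * k * map_mat of_int g, m))"
  have wC: "coset p d w \<in> O_vph p d v g k absv h"
    unfolding O_vph_def w_def using y' mc mG by blast
  have wc: "pcar d w" unfolding w_def pcar_def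
    using k'c kc a'D(1) hc m'c mc a_v_carrier[of d v] Gr by (simp add: mm)
  define \<beta>2 where "\<beta>2 = map_mat of_int (adj_mat g) * \<beta> * (map_mat of_int g :: rat mat)"
  define \<beta>2' where "\<beta>2' = map_mat of_int (adj_mat g) * transpose_mat \<beta> * (map_mat of_int g :: rat mat)"
  have \<beta>T: "transpose_mat \<beta> \<in> H_pts d v (Zinvp p)" using H_transpose[OF \<beta> v] .
  have G1: "(\<beta>, \<beta>2) \<in> Gamma p d" unfolding \<beta>2_def using conj_Gamma[OF \<beta>] .
  have G2: "(transpose_mat \<beta>, \<beta>2') \<in> Gamma p d" unfolding \<beta>2'_def using conj_Gamma[OF \<beta>T] .
  have Hq: "(map_mat of_int (adj_mat g) :: rat mat) \<in> carrier_mat d d" by (rule HC)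
  have Gq: "(map_mat of_int g :: rat mat) \<in> carrier_mat d d" by (rule GC)
  have i2: "\<beta>2' * \<beta>2 = 1\<^sub>m d" unfolding \<beta>2_def \<beta>2'_def
    using Hq Gq \<beta>D(1) by (simp add: mm cancels cancel_d[OF _ \<beta>D(1) \<beta>D(4)] HG)
  have xw: "x = ptmul w (diag_emb (\<beta>, \<beta>2))"
  proof -
    have r2: "map_mat of_rat \<beta>2 = map_mat of_int (adj_mat g) * map_mat of_rat \<beta> * (map_mat of_int g :: real mat)"
      unfolding \<beta>2_def using map_rat_conj[OF \<beta>D(1)] .
    have k2: "map_mat of_rat \<beta>2 = map_mat of_int (adj_mat g) * map_mat of_rat \<beta> * (map_mat of_int g :: 'k mat)"
      unfolding \<beta>2_def using map_rat_conj[OF \<beta>D(1)] .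
    have e1: "k * h1 = k' * k * map_mat of_rat \<beta>"
      unfolding k'_def using kc h1c \<beta>rD(1) by (simp add: mm cancels \<beta>rD(4))
    have e2: "h2 = a' * h * map_mat of_rat \<beta>" by (rule h2q)
    have e3: "a_v d v * k * map_mat of_int g * m1 = k' * (a_v d v * k * map_mat of_int g) * map_mat of_rat \<beta>2"
    proof -
      have "k' * (a_v d v * k * map_mat of_int g) * map_mat of_rat \<beta>2
          = k' * (a_v d v * (k * (map_mat of_rat \<beta> * map_mat of_int g)))"
        unfolding r2 using k'c kc \<beta>rD(1) Gr Hr a_v_carrier[of d v] by (simp add: mm cancels)
      also have "\<dots> = a_v d v * (k' * (k * (map_mat of_rat \<beta> * map_mat of_int g)))"
        using kcomm_d[OF k', of "k * (map_mat of_rat \<beta> * map_mat of_int g)"] kc \<beta>rD(1) Gr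
        by (simp add: mm)
      also have "\<dots> = a_v d v * k * map_mat of_int g * m1"
        unfolding k'_def m1q using kc h1c \<beta>rD(1) Gr Hr a_v_carrier[of d v]
        by (simp add: mm cancels \<beta>rD(4))
      finally show ?thesis by simp
    qed
    have e4: "m2 = m' * m * map_mat of_rat \<beta>2"
      unfolding k2 m2q m'_def m_def h2q using Hk Gk a'D(1) hc \<beta>kD(1) by (simp add: mm cancels)
    show ?thesis unfolding x w_def using e1 e2 e3 e4 by simp
  qed
  have "C = coset p d x" unfolding C x_def ..
  also have "\<dots> = coset p d w" unfolding xw by (rule coset_shift[OF d1 wc G1 G2 \<beta>D(4) i2])
  finally show ?thesis using wC hM0 by blast
qed

end


lemma lastrow_map_rat:
  assumes "X \<in> carrier_mat d d" "lastrow d X"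
  shows "lastrow d (map_mat (of_rat :: rat \<Rightarrow> 'a::field_char_0) X)"
  using assms unfolding lastrow_def by auto

lemma row_eq_mult:
  assumes X: "X \<in> carrier_mat d d" and X': "X' \<in> carrier_mat d d" and Z: "Z \<in> carrier_mat d d"
    and eq: "\<And>l. l < d \<Longrightarrow> X $$ (d-1, l) = X' $$ (d-1, l)" and j: "j < d" and d: "d \<ge> 1"
  shows "(X * Z) $$ (d-1, j) = (X' * Z) $$ (d-1, j)"
proof -
  have "(X * Z) $$ (d-1, j) = (\<Sum>l\<in>{0..<d}. X $$ (d-1, l) * Z $$ (l, j))"
    using X Z j d by (simp add: scalar_prod_def)
  also have "\<dots> = (\<Sum>l\<in>{0..<d}. X' $$ (d-1, l) * Z $$ (l, j))" using eq by (intro sum.cong) auto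
  also have "\<dots> = (X' * Z) $$ (d-1, j)" using X' Z j d by (simp add: scalar_prod_def)
  finally show ?thesis .
qed

lemma lastrow_one: "lastrow d (1\<^sub>m d)" unfolding lastrow_def by auto

lemma K_lastrow: "X \<in> K_grp d \<Longrightarrow> d \<ge> 1 \<Longrightarrow> lastrow d X"
  using K_D(3) unfolding lastrow_def by blast

context mainloc
begin

lemma disj:
  assumes h1: "h1 \<in> M0 p d absv M" and h2: "h2 \<in> M0 p d absv M" and ne: "h1 \<noteq> h2"
  shows "O_vph p d v g k absv h1 \<inter> O_vph p d v g k absv h2 = {}"
proof (rule ccontr)
  assume "\<not> ?thesis"
  then obtain C where C1: "C \<in> O_vph p d v g k absv h1" and C2: "C \<in> O_vph p d v g k absv h2" by blast
  have hM: "h1 \<in> M" "h2 \<in> M" using h1 h2 unfolding M0_def by auto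
  obtain y1 n1 where Cw1: "C = coset p d (ptmul y1 ((k, h1), (a_v d v * k * map_mat of_int g, n1)))"
    and y1: "y1 \<in> DK_L d v g absv" and n1: "n1 \<in> carrier_mat d d"
    using C1 unfolding O_vph_def by blast
  obtain y2 n2 where Cw2: "C = coset p d (ptmul y2 ((k, h2), (a_v d v * k * map_mat of_int g, n2)))"
    and y2: "y2 \<in> DK_L d v g absv" and n2: "n2 \<in> carrier_mat d d"
    using C2 unfolding O_vph_def by blast
  obtain k1 a1 m1 where yy1: "y1 = ((k1, a1), (k1, m1))" and k1: "k1 \<in> K_grp d"
    and a1: "a1 \<in> H_pts d v (Zp absv)" and m1: "m1 \<in> carrier_mat d d"
    using y1 unfolding DK_L_def by blast
  obtain k2 a2 m2 where yy2: "y2 = ((k2, a2), (k2, m2))" and k2: "k2 \<in> K_grp d"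
    and a2: "a2 \<in> H_pts d v (Zp absv)" and m2: "m2 \<in> carrier_mat d d"
    using y2 unfolding DK_L_def by blast
  note kc = kD(1)
  have Gr: "(map_mat of_int g :: real mat) \<in> carrier_mat d d" by (rule GC)
  have k1c: "k1 \<in> carrier_mat d d" using SO_D(1)[OF K_D(1)[OF k1 d1]] .
  have k2S: "k2 \<in> SO_pts d UNIV" using K_D(1)[OF k2 d1] .
  note k2D = SO_D[OF k2S]
  have a1c: "a1 \<in> carrier_mat d d" using H_car[OF a1] .
  note a2D = SO_D[OF H_D(1)[OF a2]]
  have h1c: "h1 \<in> carrier_mat d d" using H_car[OF M_H[OF hM(1)]] .
  have h2c: "h2 \<in> carrier_mat d d" using H_car[OF M_H[OF hM(2)]] .
  define w1 where "w1 = ptmul y1 ((k, h1), (a_v d v * k * map_mat of_int g, n1))"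
  define w2 where "w2 = ptmul y2 ((k, h2), (a_v d v * k * map_mat of_int g, n2))"
  have w1c: "pcar d w1" unfolding w1_def yy1 pcar_def
    using k1c kc a1c h1c m1 n1 a_v_carrier[of d v] Gr by (simp add: mm)
  obtain g1 g2 where gam: "(g1, g2) \<in> Gamma p d" and ww: "w1 = ptmul w2 (diag_emb (g1, g2))"
    using coset_eqD[OF _ d1 w1c, of p w2] Cw1 Cw2 unfolding w1_def w2_def by auto
  have g1S: "g1 \<in> SO_pts d (Zinvp p)" using gam unfolding Gamma_def by auto
  note g1D = SO_D[OF g1S]
  have gr: "(map_mat of_rat g1 :: real mat) \<in> carrier_mat d d" using g1D by simp
  note gkD = SO_D[OF SO_rat_map[OF g1S, where 'a = 'k]]
  have e1: "k1 * k = k2 * k * map_mat of_rat g1" using ww unfolding w1_def w2_def yy1 yy2 by simp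
  have e2: "a1 * h1 = a2 * h2 * map_mat of_rat g1" using ww unfolding w1_def w2_def yy1 yy2 by simp
  have Kt: "transpose_mat k2 * k1 \<in> K_grp d"
  proof -
    have S: "transpose_mat k2 * k1 \<in> SO_pts d UNIV"
      using SO_mult[OF subr_UNIV SO_transpose[OF k2S] K_D(1)[OF k1 d1]] .
    have e: "k1 *\<^sub>v unit_vec d (d-1) = unit_vec d (d-1)" "k2 *\<^sub>v unit_vec d (d-1) = unit_vec d (d-1)"
      using k1 k2 unfolding K_grp_def by auto
    have "(transpose_mat k2 * k1) *\<^sub>v unit_vec d (d-1) = transpose_mat k2 *\<^sub>v (k1 *\<^sub>v unit_vec d (d-1))"
      using k1c k2D by (simp add: assoc_mult_mat_vec[of _ d d _ d _])
    also have "\<dots> = unit_vec d (d-1)" using e H_transpose_fix[OF k2D(1) k2D(4) _ e(2)] by simp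
    finally show ?thesis using S unfolding K_grp_def by auto
  qed
  have grq: "map_mat of_rat g1 = transpose_mat k * (transpose_mat k2 * k1) * k"
  proof -
    have "transpose_mat k * (transpose_mat k2 * k1) * k = transpose_mat k * (transpose_mat k2 * (k1 * k))"
      using kc k1c k2D by (simp add: mm)
    also have "\<dots> = transpose_mat k * (transpose_mat k2 * (k2 * (k * map_mat of_rat g1)))"
      using e1 kc k2D gr by (simp add: mm)
    also have "\<dots> = map_mat of_rat g1"
      using kc k2D gr by (simp add: mm cancel_d[OF _ k2D(1) k2D(4)] cancel_d[OF _ kc kD(4)])
    finally show ?thesis by simp
  qed
  have grH: "(map_mat of_rat g1 :: real mat) \<in> H_pts d v UNIV" unfolding grq using conjH[OF Kt] .
  have g1v: "g1 *\<^sub>v map_vec of_int v = map_vec of_int v"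
  proof -
    have "map_vec (of_rat :: rat \<Rightarrow> real) (g1 *\<^sub>v map_vec of_int v) = map_mat of_rat g1 *\<^sub>v map_vec of_rat (map_vec of_int v)"
      using g1D v by (intro of_rat_hom.mult_mat_vec_hom[of _ d d]) auto
    also have "\<dots> = map_mat of_rat g1 *\<^sub>v map_vec of_int v" by (simp add: rat_int_vec)
    also have "\<dots> = map_vec of_int v" using H_D(2)[OF grH] .
    also have "\<dots> = map_vec (of_rat :: rat \<Rightarrow> real) (map_vec of_int v)" by (simp add: rat_int_vec)
    finally show ?thesis by (rule rat_vec_inj)
  qed
  have g1H: "g1 \<in> H_pts d v (Zinvp p)" using g1S g1v unfolding H_pts_def by auto
  have "h2 = transpose_mat a2 * a1 * h1 * map_mat of_rat (transpose_mat g1)"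
  proof -
    have "transpose_mat a2 * a1 * h1 * map_mat of_rat (transpose_mat g1)
       = transpose_mat a2 * (a1 * h1) * transpose_mat (map_mat of_rat g1)"
      using a2D a1c h1c g1D by (simp add: mm map_transpose)
    also have "\<dots> = h2" unfolding e2 using a2D h2c gkD by (simp add: mm cancel_d[OF _ a2D(1) a2D(4)] gkD(3))
    finally show ?thesis by simp
  qed
  moreover have "transpose_mat a2 * a1 \<in> H_pts d v (Zp absv)"
    using H_mult[OF subr_Zp H_transpose[OF a2 v] a1 v] .
  moreover have "transpose_mat g1 \<in> H_pts d v (Zinvp p)" using H_transpose[OF g1H v] .
  ultimately have in1: "h2 \<in> dcoset p d v absv h1" unfolding dcoset_def by blast
  have "h2 = 1\<^sub>m d * h2 * map_mat of_rat (1\<^sub>m d)" using h2c by (simp add: map_rat_one mm)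
  hence in2: "h2 \<in> dcoset p d v absv h2" unfolding dcoset_def
    using H_one[OF subr_Zp v] H_one[OF subr_Zinvp v] by blast
  have "disjoint_family_on (dcoset p d v absv) M" using rep unfolding is_rep_set_def by blast
  hence "dcoset p d v absv h1 \<inter> dcoset p d v absv h2 = {}"
    using hM ne unfolding disjoint_family_on_def by blast
  thus False using in1 in2 by blast
qed

end


context mainloc
begin

lemma prim_row:
  fixes A Ai :: "'k mat" and B Bi :: "rat mat"
  assumes A: "A \<in> carrier_mat d d" "Ai \<in> carrier_mat d d" "A * Ai = 1\<^sub>m d" "entries_in d (Zp absv) Ai"
    and B: "B \<in> carrier_mat d d" "Bi \<in> carrier_mat d d" "Bi * B = 1\<^sub>m d" "entries_in d (Zinvp p) B"
    and rA: "\<And>l. l < d \<Longrightarrow> A $$ (d-1, l) = of_int (r l)"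
    and rB: "\<And>l. l < d \<Longrightarrow> Bi $$ (d-1, l) = of_int (r l)"
  shows "prim d r"
  unfolding prim_def
proof (intro allI impI)
  fix n :: int assume n: "\<forall>i<d. n dvd r i"
  define t where "t = (\<lambda>i. r i div n)"
  have rt: "r i = n * t i" if "i < d" for i using n that unfolding t_def by auto
  have dd: "d - 1 < d" using d1 by simp
  have s1: "(A * Ai) $$ (d-1, d-1) = (\<Sum>l\<in>{0..<d}. A $$ (d-1, l) * Ai $$ (l, d-1))"
    using A(1,2) dd by (simp add: scalar_prod_def)
  have "(1::'k) = (A * Ai) $$ (d-1, d-1)" using A(3) dd by simp
  also have "\<dots> = (\<Sum>l\<in>{0..<d}. A $$ (d-1, l) * Ai $$ (l, d-1))" by (rule s1)
  also have "\<dots> = (\<Sum>l\<in>{0..<d}. of_int n * (of_int (t l) * Ai $$ (l, d-1)))"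
    using rA rt by (intro sum.cong) auto
  also have "\<dots> = of_int n * (\<Sum>l\<in>{0..<d}. of_int (t l) * Ai $$ (l, d-1))"
    by (simp add: sum_distrib_left)
  finally have 1: "(1::'k) = of_int n * (\<Sum>l\<in>{0..<d}. of_int (t l) * Ai $$ (l, d-1))" .
  have z: "(\<Sum>l\<in>{0..<d}. of_int (t l) * Ai $$ (l, d-1)) \<in> Zp absv"
    using A(4) dd unfolding entries_in_def
    by (intro subr_sum[OF subr_Zp]) (auto intro: subrD[OF subr_Zp])
  have s2: "(Bi * B) $$ (d-1, d-1) = (\<Sum>l\<in>{0..<d}. Bi $$ (d-1, l) * B $$ (l, d-1))"
    using B(1,2) dd by (simp add: scalar_prod_def)
  have "(1::rat) = (Bi * B) $$ (d-1, d-1)" using B(3) dd by simp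
  also have "\<dots> = (\<Sum>l\<in>{0..<d}. Bi $$ (d-1, l) * B $$ (l, d-1))" by (rule s2)
  also have "\<dots> = (\<Sum>l\<in>{0..<d}. of_int n * (of_int (t l) * B $$ (l, d-1)))"
    using rB rt by (intro sum.cong) auto
  also have "\<dots> = of_int n * (\<Sum>l\<in>{0..<d}. of_int (t l) * B $$ (l, d-1))"
    by (simp add: sum_distrib_left)
  finally have 2: "(1::rat) = of_int n * (\<Sum>l\<in>{0..<d}. of_int (t l) * B $$ (l, d-1))" .
  have q: "(\<Sum>l\<in>{0..<d}. of_int (t l) * B $$ (l, d-1)) \<in> Zinvp p"
    using B(4) dd unfolding entries_in_def
    by (intro subr_sum[OF subr_Zinvp]) (auto intro: subrD[OF subr_Zinvp])
  have n0: "n \<noteq> 0" using 2 by auto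
  define q0 where "q0 = (1::rat) / of_int n"
  have q0q: "q0 = (\<Sum>l\<in>{0..<d}. of_int (t l) * B $$ (l, d-1))"
    unfolding q0_def using 2 n0 by (simp add: field_simps)
  have "(of_rat q0 :: 'k) = (\<Sum>l\<in>{0..<d}. of_int (t l) * Ai $$ (l, d-1))"
    unfolding q0_def using 1 n0 by (simp add: field_simps of_rat_divide)
  hence aq: "absv (of_rat q0) \<le> 1" using z unfolding Zp_def by simp
  have "q0 \<in> \<int>" using key[OF _ aq] q q0q by simp
  then obtain m0 where "q0 = of_int m0" by (auto elim: Ints_cases)
  hence "n * m0 = 1" unfolding q0_def using n0
    by (metis (mono_tags, lifting) divide_eq_eq of_int_1 of_int_eq_iff of_int_eq_0_iff of_int_mult mult.commute)
  thus "n = 1 \<or> n = -1" using pos_zmult_eq_1_iff_lemma by blast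
qed


lemma RHS_U:
  assumes hM0: "h \<in> M0 p d absv M" and C: "C \<in> O_vph p d v g k absv h"
  shows "C \<in> U_set p d absv"
proof -
  obtain a0 b0 where hM: "h \<in> M" and a0: "a0 \<in> SO_pts d (Zp absv)" and b0: "b0 \<in> SO_pts d (Zinvp p)"
    and hq: "h = a0 * map_mat of_rat b0"
    using hM0 unfolding M0_def by blast
  obtain y m where Cw: "C = coset p d (ptmul y ((k, h), (a_v d v * k * map_mat of_int g, m)))"
    and y: "y \<in> DK_L d v g absv" and m: "m \<in> carrier_mat d d" "map_mat of_int g * m = h * map_mat of_int g"
    using C unfolding O_vph_def by blast
  obtain k' a' m' where yy: "y = ((k', a'), (k', m'))" and k': "k' \<in> K_grp d"
    and a': "a' \<in> H_pts d v (Zp absv)" and m': "m' \<in> carrier_mat d d" "map_mat of_int g * m' = a' * map_mat of_int g"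
    using y unfolding DK_L_def by blast
  note kc = kD(1)
  have hH: "h \<in> H_pts d v UNIV" using M_H[OF hM] .
  have hc: "h \<in> carrier_mat d d" using H_car[OF hH] .
  have a'S: "a' \<in> SO_pts d (Zp absv)" using H_D(1)[OF a'] .
  note a'D = SO_D[OF a'S] and a0D = SO_D[OF a0] and b0D = SO_D[OF b0]
  have k'S: "k' \<in> SO_pts d UNIV" using K_D(1)[OF k' d1] .
  note k'D = SO_D[OF k'S]
  have b0k: "(map_mat of_rat b0 :: 'k mat) \<in> SO_pts d UNIV" using SO_rat_map[OF b0] .
  note b0kD = SO_D[OF b0k]
  have b0r: "(map_mat of_rat b0 :: real mat) \<in> SO_pts d UNIV" using SO_rat_map[OF b0] .
  note b0rD = SO_D[OF b0r]
  have Gr: "(map_mat of_int g :: real mat) \<in> carrier_mat d d" by (rule GC)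
  have Hr: "(map_mat of_int (adj_mat g) :: real mat) \<in> carrier_mat d d" by (rule HC)
  have Gk: "(map_mat of_int g :: 'k mat) \<in> carrier_mat d d" by (rule GC)
  have Hk: "(map_mat of_int (adj_mat g) :: 'k mat) \<in> carrier_mat d d" by (rule HC)
  have Gq: "(map_mat of_int g :: rat mat) \<in> carrier_mat d d" by (rule GC)
  have Hq: "(map_mat of_int (adj_mat g) :: rat mat) \<in> carrier_mat d d" by (rule HC)
  have mq: "m = map_mat of_int (adj_mat g) * (h * map_mat of_int g)" using conj_eq[OF m(1,2) hc] .
  have m'q: "m' = map_mat of_int (adj_mat g) * (a' * map_mat of_int g)" using conj_eq[OF m'(1,2) a'D(1)] .
  note cancels = cancel_d[OF GC HC GH] cancel_d[OF HC GC HG]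
    cancel_d[OF a'D(1) _ a'D(3)] cancel_d[OF a0D(1) _ a0D(3)] cancel_d[OF b0kD(1) _ b0kD(3)]
    cancel_d[OF b0D(1) _ b0D(3)] cancel_d[OF _ b0D(1) b0D(4)]
  define A where "A = map_mat of_int (adj_mat g) * (a' * a0) * (map_mat of_int g :: 'k mat)"
  define Ai where "Ai = map_mat of_int (adj_mat g) * transpose_mat (a' * a0) * (map_mat of_int g :: 'k mat)"
  define B where "B = map_mat of_int (adj_mat g) * b0 * (map_mat of_int g :: rat mat)"
  define Bi where "Bi = map_mat of_int (adj_mat g) * transpose_mat b0 * (map_mat of_int g :: rat mat)"
  define Y where "Y = m' * m"
  have a'a0: "a' * a0 \<in> SO_pts d (Zp absv)" using SO_mult[OF subr_Zp a'S a0] .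
  note aaD = SO_D[OF a'a0]
  have Ac: "A \<in> carrier_mat d d" unfolding A_def using Hk Gk aaD by (simp add: mm)
  have Aic: "Ai \<in> carrier_mat d d" unfolding Ai_def using Hk Gk aaD by (simp add: mm)
  have Bc: "B \<in> carrier_mat d d" unfolding B_def using Hq Gq b0D by (simp add: mm)
  have Bic: "Bi \<in> carrier_mat d d" unfolding Bi_def using Hq Gq b0D by (simp add: mm)
  have Yc: "Y \<in> carrier_mat d d" unfolding Y_def using m m' by (simp add: mm)
  have AAi: "A * Ai = 1\<^sub>m d" unfolding A_def Ai_def
    using Hk Gk a'D a0D by (simp add: mm cancels transpose_mult[of a' d d a0 d] HG)
  have BiB: "Bi * B = 1\<^sub>m d" unfolding B_def Bi_def
    using Hq Gq b0D by (simp add: mm cancels HG)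
  have BBi: "B * Bi = 1\<^sub>m d" unfolding B_def Bi_def
    using Hq Gq b0D by (simp add: mm cancels HG)
  have rB: "map_mat of_rat B = map_mat of_int (adj_mat g) * map_mat of_rat b0 * (map_mat of_int g :: 'k mat)"
    unfolding B_def by (rule map_rat_conj[OF b0D(1)])
  have rBi: "map_mat of_rat Bi = map_mat of_int (adj_mat g) * transpose_mat (map_mat of_rat b0) * (map_mat of_int g :: 'k mat)"
    unfolding Bi_def using map_rat_conj[OF SO_D(1)[OF SO_transpose[OF b0]]] by (simp add: map_transpose)
  have YAB: "Y = A * map_mat of_rat B" unfolding Y_def rB A_def mq m'q hq
    using Hk Gk a'D a0D b0kD by (simp add: mm cancels)
  have AYB: "A = Y * map_mat of_rat Bi" unfolding Y_def rBi A_def mq m'q hq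
    using Hk Gk a'D a0D b0kD by (simp add: mm cancels)
  have Yconj: "Y = map_mat of_int (adj_mat g) * (a' * h) * map_mat of_int g" unfolding Y_def mq m'q
    using Hk Gk a'D hc by (simp add: mm cancels)
  have a'hH: "a' * h \<in> H_pts d v UNIV" using H_mult[OF subr_UNIV H_mono[OF _ a'] hH v] by simp
  have Ylr: "lastrow d Y" unfolding Yconj using H_conj_ASL(1)[OF a'hH] .
  have Arow: "A $$ (d-1, j) = of_rat (Bi $$ (d-1, j))" if j: "j < d" for j
  proof -
    have "A $$ (d-1, j) = (Y * map_mat of_rat Bi) $$ (d-1, j)" using AYB by simp
    also have "\<dots> = map_mat of_rat Bi $$ (d-1, j)" using lastrow_left[OF Yc Ylr _ j d1] Bic by simp
    finally show ?thesis using Bic j d1 by simp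
  qed
  have Aent: "entries_in d (Zp absv) A" unfolding A_def
    using Hk Gk aaD a'D(1,2) a0D(1,2) by (intro entries_mult[OF subr_Zp] entries_of_int[OF subr_Zp]) (auto simp: mm)
  have Aient: "entries_in d (Zp absv) Ai" unfolding Ai_def
    using Hk Gk aaD a'D(1) a0D(1) SO_D(2)[OF SO_transpose[OF a'a0]]
    by (intro entries_mult[OF subr_Zp] entries_of_int[OF subr_Zp]) (auto simp: mm)
  have Bent: "entries_in d (Zinvp p) B" unfolding B_def
    using Hq Gq b0D by (intro entries_mult[OF subr_Zinvp] entries_of_int[OF subr_Zinvp]) (auto simp: mm)
  have Bient: "entries_in d (Zinvp p) Bi" unfolding Bi_def
    using Hq Gq b0D SO_D(2)[OF SO_transpose[OF b0]]
    by (intro entries_mult[OF subr_Zinvp] entries_of_int[OF subr_Zinvp]) (auto simp: mm)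
  define r where "r = (\<lambda>j. \<lfloor>Bi $$ (d-1, j)\<rfloor>)"
  have rint: "Bi $$ (d-1, j) = of_int (r j)" if j: "j < d" for j
  proof -
    have "d - 1 < d" using d1 by simp
    hence z: "Bi $$ (d-1, j) \<in> Zinvp p" using Bient j unfolding entries_in_def by blast
    have "absv (A $$ (d-1, j)) \<le> 1"
      using Aent j \<open>d - 1 < d\<close> unfolding entries_in_def Zp_def by blast
    hence "absv (of_rat (Bi $$ (d-1, j)) :: 'k) \<le> 1" using Arow[OF j] by simp
    hence "Bi $$ (d-1, j) \<in> \<int>" using key[OF z] by simp
    thus ?thesis unfolding r_def by (metis floor_of_int Ints_cases)
  qed
  have rA: "A $$ (d-1, j) = of_int (r j)" if "j < d" for j using Arow[OF that] rint[OF that] by simp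
  have pr: "prim d r" by (rule prim_row[OF Ac Aic AAi Aient Bc Bic BiB Bent rA rint])
  obtain C0 C0i :: "int mat" where C0: "C0 \<in> carrier_mat d d" "C0i \<in> carrier_mat d d"
    "C0 * C0i = 1\<^sub>m d" "C0i * C0 = 1\<^sub>m d" "det C0 = 1" "\<And>j. j < d \<Longrightarrow> C0 $$ (d-1, j) = r j"
    using complete[OF d pr] by blast
  have dC0i: "det C0i = 1" using det_mult[OF C0(1) C0(2)] C0(3,5) by simp
  have Ck: "(map_mat of_int C0 :: 'k mat) \<in> carrier_mat d d" "(map_mat of_int C0i :: 'k mat) \<in> carrier_mat d d"
    using C0 by auto
  have Cq: "(map_mat of_int C0 :: rat mat) \<in> carrier_mat d d" "(map_mat of_int C0i :: rat mat) \<in> carrier_mat d d"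
    using C0 by auto
  note Cinv = int_inv_map[OF C0(1,2,3)] int_inv_map[OF C0(2,1,4)]
  note cancelsC = cancel_d[OF Ck Cinv(1)] cancel_d[OF Ck(2) Ck(1) Cinv(2)]
    cancel_d[OF Cq Cinv(1)] cancel_d[OF Cq(2) Cq(1) Cinv(2)]
  define A' where "A' = A * map_mat of_int C0i"
  define B' where "B' = map_mat of_int C0 * B"
  define B'i where "B'i = Bi * map_mat of_int C0i"
  have A'c: "A' \<in> carrier_mat d d" unfolding A'_def using Ac Ck by (simp add: mm)
  have B'c: "B' \<in> carrier_mat d d" unfolding B'_def using Bc Cq by (simp add: mm)
  have B'ic: "B'i \<in> carrier_mat d d" unfolding B'i_def using Bic Cq by (simp add: mm)
  have A'lr: "lastrow d A'" unfolding lastrow_def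
  proof (intro allI impI)
    fix j assume j: "j < d"
    have "A' $$ (d-1, j) = (map_mat of_int C0 * map_mat of_int C0i) $$ (d-1, j)"
      unfolding A'_def using row_eq_mult[OF Ac Ck(1) Ck(2) _ j d1] rA C0(1,6) by simp
    thus "A' $$ (d-1, j) = (if j = d-1 then 1 else 0)" using Cinv(1)[where 'a='k] j d1 by simp
  qed
  have B'lr: "lastrow d B'" unfolding lastrow_def
  proof (intro allI impI)
    fix j assume j: "j < d"
    have "B' $$ (d-1, j) = (Bi * B) $$ (d-1, j)"
      unfolding B'_def using row_eq_mult[OF Cq(1) Bic Bc _ j d1] rint C0(1,6) by simp
    thus "B' $$ (d-1, j) = (if j = d-1 then 1 else 0)" using BiB j d1 by simp
  qed
  have B'B'i: "B' * B'i = 1\<^sub>m d" unfolding B'_def B'i_def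
    using Bc Bic Cq by (simp add: mm cancelsC cancel_d[OF Bc Bic BBi] Cinv)
  have B'iB': "B'i * B' = 1\<^sub>m d" unfolding B'_def B'i_def
    using Bc Bic Cq by (simp add: mm cancelsC BiB)
  have B'ilr: "lastrow d B'i" using lastrow_inv[OF B'c B'lr B'ic B'B'i d1] .
  have dA: "det A = 1" unfolding A_def using conj_det[OF aaD(1)] aaD(5) by simp
  have dB: "det B = 1" unfolding B_def using conj_det[OF b0D(1)] b0D(5) by simp
  have dBi: "det Bi = 1" unfolding Bi_def using conj_det[of "transpose_mat b0"] b0D det_transpose[OF b0D(1)] by simp
  have dA': "det A' = 1" unfolding A'_def using det_mult[OF Ac Ck(2)] dA dC0i by simp
  have dB': "det B' = 1" unfolding B'_def using det_mult[OF Cq(1) Bc] dB C0(5) by simp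
  have dB'i: "det B'i = 1" unfolding B'i_def using det_mult[OF Bic Cq(2)] dBi dC0i by simp
  have A'ASL: "A' \<in> ASL_pts d (Zp absv)"
    by (rule ASL_intro[OF A'c _ A'lr dA' d1]) (unfold A'_def, rule entries_mult[OF subr_Zp Ac Ck(2) Aent entries_of_int[OF subr_Zp C0(2)]])
  have B'ASL: "B' \<in> ASL_pts d (Zinvp p)"
    by (rule ASL_intro[OF B'c _ B'lr dB' d1]) (unfold B'_def, rule entries_mult[OF subr_Zinvp Cq(1) Bc entries_of_int[OF subr_Zinvp C0(1)] Bent])
  have B'iASL: "B'i \<in> ASL_pts d (Zinvp p)"
    by (rule ASL_intro[OF B'ic _ B'ilr dB'i d1]) (unfold B'i_def, rule entries_mult[OF subr_Zinvp Bic Cq(2) Bient entries_of_int[OF subr_Zinvp C0(2)]])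
  have G1: "(b0, B') \<in> Gamma p d" using b0 B'ASL unfolding Gamma_def by auto
  have G2: "(transpose_mat b0, B'i) \<in> Gamma p d" using SO_transpose[OF b0] B'iASL unfolding Gamma_def by auto
  define y0 where "y0 = ((k' * k * transpose_mat (map_mat of_rat b0), a' * a0),
                         (k' * (a_v d v * k * map_mat of_int g) * map_mat of_rat B'i, A'))"
  have rB'i: "(map_mat of_rat B'i :: real mat) \<in> carrier_mat d d" using B'ic by simp
  have y0G: "y0 \<in> G_RZp d absv"
  proof -
    have 1: "k' * k * transpose_mat (map_mat of_rat b0) \<in> SO_pts d UNIV"
      by (intro SO_mult[OF subr_UNIV] k'S kS SO_transpose b0r)
    have akGc: "a_v d v * k * map_mat of_int g \<in> carrier_mat d d" using a_v_carrier[of d v] kc Gr by (simp add: mm)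
    have lr: "lastrow d (k' * (a_v d v * k * map_mat of_int g) * map_mat of_rat B'i)"
      using lastrow_mult[OF _ lastrow_mult[OF k'D(1) K_lastrow[OF k' d1] akGc akG_lastrow d1] rB'i
          lastrow_map_rat[OF B'ic B'ilr] d1] k'D(1) akGc by (simp add: mm)
    have dt: "det (k' * (a_v d v * k * map_mat of_int g) * map_mat of_rat B'i) = 1"
      using det_mult[OF k'D(1) akGc] det_mult[of "k' * (a_v d v * k * map_mat of_int g)" d "map_mat of_rat B'i"]
        k'D akGc rB'i akG_det dB'i by (simp add: mm)
    have 3: "k' * (a_v d v * k * map_mat of_int g) * map_mat of_rat B'i \<in> ASL_pts d UNIV"
      by (rule ASL_intro[OF _ entries_UNIV lr dt d1]) (use k'D akGc rB'i in \<open>simp add: mm\<close>)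
    show ?thesis unfolding y0_def G_RZp_def using 1 SO_mult[OF subr_Zp a'S a0] 3 A'ASL by auto
  qed
  have y0c: "pcar d y0" unfolding y0_def pcar_def
    using k'D kc b0rD a'D a0D a_v_carrier[of d v] Gr rB'i A'c by (simp add: mm)
  have w: "ptmul y ((k, h), (a_v d v * k * map_mat of_int g, m)) = ptmul y0 (diag_emb (b0, B'))"
  proof -
    have e1: "k' * k = k' * k * transpose_mat (map_mat of_rat b0) * map_mat of_rat b0"
      using k'D kc b0rD by (simp add: mm b0rD(4))
    have e2: "a' * h = a' * a0 * map_mat of_rat b0" unfolding hq using a'D a0D b0kD by (simp add: mm)
    have e3: "k' * (a_v d v * k * map_mat of_int g) = k' * (a_v d v * k * map_mat of_int g) * map_mat of_rat B'i * map_mat of_rat B'"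
    proof -
      have "map_mat of_rat B'i * map_mat of_rat B' = (map_mat of_rat (B'i * B') :: real mat)"
        using map_rat_mult[OF B'ic B'c, where 'a = real] by simp
      hence "map_mat of_rat B'i * map_mat of_rat B' = (1\<^sub>m d :: real mat)" using B'iB' map_rat_one[where 'a = real] by simp
      thus ?thesis using k'D kc Gr a_v_carrier[of d v] rB'i B'c by (simp add: mm)
    qed
    have e4: "m' * m = A' * map_mat of_rat B'"
    proof -
      have "map_mat of_rat B' = map_mat of_int C0 * (map_mat of_rat B :: 'k mat)"
        unfolding B'_def using map_rat_mult[OF Cq(1) Bc, where 'a = 'k] by (simp add: rat_int_mat)
      hence "A' * map_mat of_rat B' = A * map_mat of_rat B"
        unfolding A'_def using Ac Ck Bc by (simp add: mm cancelsC)
      thus ?thesis using YAB unfolding Y_def by simp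
    qed
    show ?thesis unfolding yy y0_def using e1 e2 e3 e4 hc m by (simp add: mm)
  qed
  have "C = coset p d (ptmul y0 (diag_emb (b0, B')))" unfolding Cw w ..
  also have "\<dots> = coset p d y0" by (rule coset_shift[OF d1 y0c G1 G2 b0D(4) B'iB'])
  finally show ?thesis unfolding U_set_def using y0G by blast
qed

end


theorem corollary3p5:
  fixes p d :: nat and v :: "int vec" and g :: "int mat" and k :: "real mat"
    and absv :: "'k::field_char_0 \<Rightarrow> real" and M :: "'k mat set"
  assumes "d \<ge> 2"
    and "prime p" and "odd p"
    and "is_Qp p absv"
    and "primitive d v"
    and "is_gv d v g"
    and "is_kv d v k"
    and "is_rep_set p d v absv M"
  shows "O_vp p d v g k TYPE('k) \<inter> U_set p d absv = (\<Union>h\<in>M0 p d absv M. O_vph p d v g k absv h)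
         \<and> disjoint_family_on (O_vph p d v g k absv) (M0 p d absv M)"
proof -
  interpret mainloc d v g k p absv M
    by (unfold_locales) (use assms in auto)
  have 1: "O_vp p d v g k TYPE('k) \<inter> U_set p d absv \<subseteq> (\<Union>h\<in>M0 p d absv M. O_vph p d v g k absv h)"
    using LHS_sub by blast
  have 2: "(\<Union>h\<in>M0 p d absv M. O_vph p d v g k absv h) \<subseteq> O_vp p d v g k TYPE('k) \<inter> U_set p d absv"
  proof
    fix C assume "C \<in> (\<Union>h\<in>M0 p d absv M. O_vph p d v g k absv h)"
    then obtain h where h: "h \<in> M0 p d absv M" and C: "C \<in> O_vph p d v g k absv h" by blast
    have "h \<in> M" using h unfolding M0_def by auto
    thus "C \<in> O_vp p d v g k TYPE('k) \<inter> U_set p d absv"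
      using O_vph_sub_O_vp[of h] RHS_U[OF h C] C by blast
  qed
  have 3: "disjoint_family_on (O_vph p d v g k absv) (M0 p d absv M)"
    unfolding disjoint_family_on_def using disj by blast
  show ?thesis using 1 2 3 by blast
qed


end
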